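(* Let $G,G'$ be compact Lie groups with Lie algebras $\mathfrak{g},\mathfrak{g}'$, and let $V,W\in\mathrm{Irr}(G,\mathbb{C})$, $V',W'\in\mathrm{Irr}(G',\mathbb{C})$. Consider $V\otimes V'$, $W\otimes W'$ as irreducible complex $G\times G'$-modules. Then: (i) if $a_{V,W}\neq0$ or $a_{V',W'}\neq0$, then $a_{V\otimes V',W\otimes W'}\ne0$; (ii) if $b_V\ne0$ and $b_{V'}\ne0$, then $b_{V\otimes V'}\neq0$; (iii) if $V$ is of real type with $b_V\ne0$ and $V'$ is of quaternionic type with $c_{V'}\neq0$ (or vice versa, with the roles of $(G,V)$ and $(G',V')$ exchanged), then $c_{V\otimes V'}\neq 0$.
   Context: For a compact Lie group $H$ with Lie algebra $\mathfrak{h}$: $\mathrm{Irr}(H,\mathbb{C})$ is a set of representatives of isomorphism classes of irreducible complex $H$-modules with representations $\rho_V$; $V$ is of real (resp. quaternionic) type if there is a conjugate-linear $H$-map $J:V\to V$ with $J^2=\mathrm{Id}$ (resp. $-\mathrm{Id}$), of complex type otherwise. $\mathrm{Sym}^2(\mathfrak{h})$ is the real span of $Y\cdot Z=\frac12(Y\otimes Z+Z\otimes Y)$; $D_V:\mathrm{Sym}^2(\mathfrak{h})\to\mathrm{End}(V)$ is linear with $D_V(Y\cdot Z)=-\frac12((\rho_V)_*(Y)(\rho_V)_*(Z)+(\rho_V)_*(Z)(\rho_V)_*(Y))$; $p_V(s)=\det(D_V(s)-X\mathrm{Id})$; $a_{V,W}(s)=\mathrm{res}(p_V(s),p_W(s))$,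 $b_V(s)=\mathrm{res}(p_V(s),p_V(s)')$, $c_V(s)=\mathrm{res}(p_V(s),p_V(s)'')$ ($\mathrm{res}$ = resultant, derivatives in $X$); "$\ne0$" means not identically zero on $\mathrm{Sym}^2(\mathfrak{h})$. The group $G\times G'$ acts on $V\otimes V'$ by $\rho_V(x)\otimes\rho_{V'}(x')$; its Lie algebra is $\mathfrak{g}\oplus\mathfrak{g}'$. *)

theory Defs
  imports "HOL-Analysis.Analysis" "Subresultants.Resultant_Prelim"
begin

primrec mpow :: "complex^'n^'n \<Rightarrow> nat \<Rightarrow> complex^'n^'n" where
  "mpow A 0 = Finite_Cartesian_Product.mat 1"
| "mpow A (Suc k) = A ** mpow A k"

definition mexp :: "complex^'n^'n \<Rightarrow> complex^'n^'n" where
  "mexp A = (\<Sum>k. (1 / fact k) *\<^sub>R mpow A k)"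

text \<open>A compact Lie group, realised (up to isomorphism, by Peter--Weyl and Cartan's
  closed subgroup theorem) as a compact subgroup of GL(n, C).\<close>

definition compact_lie_group :: "(complex^'n^'n) set \<Rightarrow> bool" where
  "compact_lie_group G \<longleftrightarrow> compact G \<and> Finite_Cartesian_Product.mat 1 \<in> G \<and>
     (\<forall>g\<in>G. invertible g \<and> matrix_inv g \<in> G) \<and>
     (\<forall>g\<in>G. \<forall>h\<in>G. g ** h \<in> G)"

definition lie_alg :: "(complex^'n^'n) set \<Rightarrow> (complex^'n^'n) set" where
  "lie_alg G = {X. \<forall>t::real. mexp (t *\<^sub>R X) \<in> G}"

definition is_rep :: "(complex^'n^'n) set \<Rightarrow> (complex^'n^'n \<Rightarrow> complex^'m^'m) \<Rightarrow> bool" where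
  "is_rep G \<rho> \<longleftrightarrow> continuous_on G \<rho> \<and> (\<forall>g\<in>G. invertible (\<rho> g)) \<and>
     (\<forall>g\<in>G. \<forall>h\<in>G. \<rho> (g ** h) = \<rho> g ** \<rho> h)"

definition csubspace :: "(complex^'m) set \<Rightarrow> bool" where
  "csubspace U \<longleftrightarrow> 0 \<in> U \<and> (\<forall>x\<in>U. \<forall>y\<in>U. x + y \<in> U) \<and> (\<forall>c. \<forall>x\<in>U. c *s x \<in> U)"

definition irreducible_rep :: "(complex^'n^'n) set \<Rightarrow> (complex^'n^'n \<Rightarrow> complex^'m^'m) \<Rightarrow> bool" where
  "irreducible_rep G \<rho> \<longleftrightarrow> is_rep G \<rho> \<and>
     (\<forall>U. csubspace U \<and> (\<forall>g\<in>G. \<forall>v\<in>U. \<rho> g *v v \<in> U) \<longrightarrow> U = {0} \<or> U = UNIV)"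

definition conj_linear_Gmap :: "(complex^'n^'n) set \<Rightarrow> (complex^'n^'n \<Rightarrow> complex^'m^'m)
     \<Rightarrow> (complex^'m \<Rightarrow> complex^'m) \<Rightarrow> bool" where
  "conj_linear_Gmap G \<rho> J \<longleftrightarrow> (\<forall>x y. J (x + y) = J x + J y) \<and>
     (\<forall>c x. J (c *s x) = cnj c *s J x) \<and> (\<forall>g\<in>G. \<forall>v. J (\<rho> g *v v) = \<rho> g *v J v)"

definition real_type :: "(complex^'n^'n) set \<Rightarrow> (complex^'n^'n \<Rightarrow> complex^'m^'m) \<Rightarrow> bool" where
  "real_type G \<rho> \<longleftrightarrow> (\<exists>J. conj_linear_Gmap G \<rho> J \<and> (\<forall>v. J (J v) = v))"

definition quaternionic_type :: "(complex^'n^'n) set \<Rightarrow> (complex^'n^'n \<Rightarrow> complex^'m^'m) \<Rightarrow> bool" where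
  "quaternionic_type G \<rho> \<longleftrightarrow> (\<exists>J. conj_linear_Gmap G \<rho> J \<and> (\<forall>v. J (J v) = - v))"

definition drep :: "(complex^'n^'n \<Rightarrow> complex^'m^'m) \<Rightarrow> complex^'n^'n \<Rightarrow> complex^'m^'m" where
  "drep \<rho> X = vector_derivative (\<lambda>t::real. \<rho> (mexp (t *\<^sub>R X))) (at 0)"

text \<open>An element of Sym^2(h) is a finite sum of symmetric products Y.Z with Y, Z in h
  (real scalars being absorbed into Y); it is represented by the list of the pairs (Y, Z).
  D_V is extended linearly.\<close>

definition D_op :: "(complex^'n^'n \<Rightarrow> complex^'m^'m) \<Rightarrow> ((complex^'n^'n) \<times> (complex^'n^'n)) list
     \<Rightarrow> complex^'m^'m" where
  "D_op \<rho> s = (\<Sum>(Y, Z) \<leftarrow> s. (- 1 / 2 :: real) *\<^sub>R (drep \<rho> Y ** drep \<rho> Z + drep \<rho> Z ** drep \<rho> Y))"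

definition sym2_elem :: "(complex^'n^'n) set \<Rightarrow> ((complex^'n^'n) \<times> (complex^'n^'n)) list \<Rightarrow> bool" where
  "sym2_elem G s \<longleftrightarrow> set s \<subseteq> lie_alg G \<times> lie_alg G"

definition char_pol :: "complex^'m^'m \<Rightarrow> complex poly" where
  "char_pol A = Determinants.det (\<chi> i j. [:A $ i $ j:] - (if i = j then [:0, 1:] else 0))"

definition p_V :: "(complex^'n^'n \<Rightarrow> complex^'m^'m) \<Rightarrow> ((complex^'n^'n) \<times> (complex^'n^'n)) list
     \<Rightarrow> complex poly" where
  "p_V \<rho> s = char_pol (D_op \<rho> s)"

text \<open>"a_{V,W} \<noteq> 0" etc.: not identically zero on Sym^2(h).\<close>

definition a_nonzero :: "(complex^'n^'n) set \<Rightarrow> (complex^'n^'n \<Rightarrow> complex^'m^'m)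
     \<Rightarrow> (complex^'n^'n \<Rightarrow> complex^'k^'k) \<Rightarrow> bool" where
  "a_nonzero G \<rho>V \<rho>W \<longleftrightarrow> (\<exists>s. sym2_elem G s \<and> resultant (p_V \<rho>V s) (p_V \<rho>W s) \<noteq> 0)"

definition b_nonzero :: "(complex^'n^'n) set \<Rightarrow> (complex^'n^'n \<Rightarrow> complex^'m^'m) \<Rightarrow> bool" where
  "b_nonzero G \<rho>V \<longleftrightarrow> (\<exists>s. sym2_elem G s \<and> resultant (p_V \<rho>V s) (pderiv (p_V \<rho>V s)) \<noteq> 0)"

definition c_nonzero :: "(complex^'n^'n) set \<Rightarrow> (complex^'n^'n \<Rightarrow> complex^'m^'m) \<Rightarrow> bool" where
  "c_nonzero G \<rho>V \<longleftrightarrow>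
     (\<exists>s. sym2_elem G s \<and> resultant (p_V \<rho>V s) (pderiv (pderiv (p_V \<rho>V s))) \<noteq> 0)"

definition blockdiag :: "complex^'n^'n \<Rightarrow> complex^'p^'p \<Rightarrow> complex^('n + 'p)^('n + 'p)" where
  "blockdiag A B = (\<chi> i j. case (i, j) of (Inl a, Inl b) \<Rightarrow> A $ a $ b
                                       | (Inr a, Inr b) \<Rightarrow> B $ a $ b
                                       | _ \<Rightarrow> 0)"

definition prod_group :: "(complex^'n^'n) set \<Rightarrow> (complex^'p^'p) set \<Rightarrow> (complex^('n + 'p)^('n + 'p)) set" where
  "prod_group G G' = {blockdiag g g' | g g'. g \<in> G \<and> g' \<in> G'}"

definition blk1 :: "complex^('n::finite + 'p::finite)^('n + 'p) \<Rightarrow> complex^'n^'n" where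
  "blk1 h = (\<chi> a b. h $ Inl a $ Inl b)"

definition blk2 :: "complex^('n::finite + 'p::finite)^('n + 'p) \<Rightarrow> complex^'p^'p" where
  "blk2 h = (\<chi> a b. h $ Inr a $ Inr b)"

text \<open>Kronecker product: the matrix of A tensor B on C^m tensor C^m' = C^(m x m').\<close>

definition kron :: "complex^'m^'m \<Rightarrow> complex^'q^'q \<Rightarrow> complex^('m \<times> 'q)^('m \<times> 'q)" where
  "kron A B = (\<chi> p q. A $ fst p $ fst q * B $ snd p $ snd q)"

definition tensor_rep :: "(complex^'n^'n \<Rightarrow> complex^'m^'m) \<Rightarrow> (complex^'p^'p \<Rightarrow> complex^'q^'q)
     \<Rightarrow> complex^('n + 'p)^('n + 'p) \<Rightarrow> complex^('m \<times> 'q)^('m \<times> 'q)" where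
  "tensor_rep \<rho> \<rho>' h = kron (\<rho> (blk1 h)) (\<rho>' (blk2 h))"

end

theory Submission
  imports Defs "Jordan_Normal_Form.Schur_Decomposition" "Subresultants.Subresultant_Gcd" "HOL-Computational_Algebra.Field_as_Ring"
begin



no_notation Matrix.vec_index (infixl "$" 100)
no_notation Matrix.scalar_prod (infix "\<bullet>" 70)

abbreviation vI :: "complex^'n^'n" where "vI \<equiv> Finite_Cartesian_Product.mat 1"

definition mnorm :: "complex^'n^'n \<Rightarrow> real" where
  "mnorm A = (\<Sum>i\<in>UNIV. \<Sum>j\<in>UNIV. norm (A$i$j))"

lemma mnorm_nonneg: "0 \<le> mnorm A"
  unfolding mnorm_def by (intro sum_nonneg) auto

lemma row_le_mnorm: "(\<Sum>l\<in>UNIV. norm (A$i$l)) \<le> mnorm A"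
  unfolding mnorm_def
  by (rule member_le_sum[of i UNIV "\<lambda>i. \<Sum>j\<in>UNIV. norm (A$i$j)", simplified]) (auto intro: sum_nonneg)

lemma mpow_entry_bound: "norm (mpow A k $ i $ j) \<le> mnorm A ^ k"
proof (induction k arbitrary: i j)
  case 0
  then show ?case by (simp add: Finite_Cartesian_Product.mat_def)
next
  case (Suc k)
  have "norm (mpow A (Suc k) $ i $ j) = norm (\<Sum>l\<in>UNIV. A$i$l * mpow A k $ l $ j)"
    by (simp add: matrix_matrix_mult_def)
  also have "\<dots> \<le> (\<Sum>l\<in>UNIV. norm (A$i$l) * mnorm A ^ k)"
    by (rule order_trans[OF norm_sum sum_mono]) (auto simp: norm_mult intro: mult_left_mono Suc.IH)
  also have "\<dots> = (\<Sum>l\<in>UNIV. norm (A$i$l)) * mnorm A ^ k"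
    by (simp add: sum_distrib_right)
  also have "\<dots> \<le> mnorm A * mnorm A ^ k"
    by (rule mult_right_mono[OF row_le_mnorm]) (simp add: mnorm_nonneg)
  finally show ?case by simp
qed

lemma summable_entry: "summable (\<lambda>k. norm ((1 / fact k) *\<^sub>R (mpow A k $ i $ j)))"
proof (rule summable_comparison_test[OF _ summable_exp[of "mnorm A"]])
  show "\<exists>N. \<forall>n\<ge>N. norm (norm ((1 / fact n) *\<^sub>R (mpow A n $ i $ j))) \<le> inverse (fact n) * mnorm A ^ n"
    using mpow_entry_bound[of A]
    by (auto simp: divide_simps)
qed

definition me :: "complex^'n^'n \<Rightarrow> 'n \<Rightarrow> 'n \<Rightarrow> complex" where
  "me A i j = (\<Sum>k. (1 / fact k) *\<^sub>R (mpow A k $ i $ j))"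

lemma sums_matrix:
  fixes f :: "nat \<Rightarrow> complex^'n^'m"
  assumes "\<And>i j. (\<lambda>k. f k $ i $ j) sums (L $ i $ j)"
  shows "f sums L"
  unfolding sums_def
proof (rule vec_tendstoI)
  fix i
  show "((\<lambda>n. (\<Sum>k<n. f k) $ i) \<longlongrightarrow> L $ i) sequentially"
  proof (rule vec_tendstoI)
    fix j
    show "((\<lambda>n. (\<Sum>k<n. f k) $ i $ j) \<longlongrightarrow> L $ i $ j) sequentially"
      using assms[of i j] by (simp add: sums_def)
  qed
qed

lemma mexp_sums: "(\<lambda>k. (1 / fact k) *\<^sub>R mpow A k) sums (\<chi> i j. me A i j)"
  by (rule sums_matrix) (auto simp: me_def intro!: summable_sums summable_norm_cancel[OF summable_entry])

lemma mexp_eq: "mexp A = (\<chi> i j. me A i j)"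
  unfolding mexp_def using sums_unique[OF mexp_sums[of A]] by simp

lemma mexp_entry: "mexp A $ i $ j = me A i j"
  by (simp add: mexp_eq)




lemma mpow_scale: "mpow (c *\<^sub>R A) k = (c^k) *\<^sub>R mpow A k"
  by (induction k) (auto simp: scalar_matrix_assoc[symmetric] matrix_scalar_ac)

lemma mpow_add: "mpow A (a + b) = mpow A a ** mpow A b"
  by (induction a) (auto simp: matrix_mul_assoc)

lemma exp_coeff_add:
  fixes s t :: real
  shows "(\<Sum>p\<le>k. (s^p / fact p) * (t^(k-p) / fact (k-p))) = (s+t)^k / fact k"
  using exp_series_add_commuting[of s t k] by (simp add: divide_inverse mult.commute)

lemma mexp_add: "mexp ((s + t) *\<^sub>R A) = mexp (s *\<^sub>R A) ** mexp (t *\<^sub>R A)"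
proof -
  {
    fix i j
    define a where "a l k = (1 / fact k) *\<^sub>R (mpow (s *\<^sub>R A) k $ i $ l)" for l k
    define b where "b l k = (1 / fact k) *\<^sub>R (mpow (t *\<^sub>R A) k $ l $ j)" for l k
    have sa: "summable (\<lambda>k. norm (a l k))" for l unfolding a_def by (rule summable_entry)
    have sb: "summable (\<lambda>k. norm (b l k))" for l unfolding b_def by (rule summable_entry)
    have prod: "me (s *\<^sub>R A) i l * me (t *\<^sub>R A) l j = (\<Sum>k. \<Sum>p\<le>k. a l p * b l (k - p))" for l
      unfolding me_def a_def[symmetric] b_def[symmetric] by (rule Cauchy_product[OF sa sb])
    have summ: "summable (\<lambda>k. \<Sum>p\<le>k. a l p * b l (k - p))" for l
      using Cauchy_product_sums[OF sa sb] by (auto simp: summable_def)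
    have trm: "(\<Sum>l\<in>UNIV. \<Sum>p\<le>k. a l p * b l (k - p)) = (1 / fact k) *\<^sub>R (mpow ((s + t) *\<^sub>R A) k $ i $ j)" for k
    proof -
      have "(\<Sum>l\<in>UNIV. \<Sum>p\<le>k. a l p * b l (k - p)) = (\<Sum>p\<le>k. \<Sum>l\<in>UNIV. a l p * b l (k - p))"
        by (rule sum.swap)
      also have "\<dots> = (\<Sum>p\<le>k. ((s^p / fact p) * (t^(k-p) / fact (k-p))) *\<^sub>R (mpow A k $ i $ j))"
      proof (rule sum.cong[OF refl])
        fix p assume p: "p \<in> {..k}"
        have "(\<Sum>l\<in>UNIV. a l p * b l (k - p)) = ((s^p / fact p) * (t^(k-p) / fact (k-p))) *\<^sub>R (\<Sum>l\<in>UNIV. mpow A p $ i $ l * mpow A (k-p) $ l $ j)"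
          unfolding a_def b_def mpow_scale vector_scaleR_component
          by (simp add: scaleR_conv_of_real sum_distrib_left algebra_simps)
        also have "(\<Sum>l\<in>UNIV. mpow A p $ i $ l * mpow A (k-p) $ l $ j) = (mpow A p ** mpow A (k-p)) $ i $ j"
          by (simp add: matrix_matrix_mult_def)
        also have "mpow A p ** mpow A (k-p) = mpow A k"
          using p by (simp flip: mpow_add)
        finally show "(\<Sum>l\<in>UNIV. a l p * b l (k - p)) = ((s^p / fact p) * (t^(k-p) / fact (k-p))) *\<^sub>R (mpow A k $ i $ j)" .
      qed
      also have "\<dots> = (\<Sum>p\<le>k. (s^p / fact p) * (t^(k-p) / fact (k-p))) *\<^sub>R (mpow A k $ i $ j)"
        by (simp add: scaleR_sum_left)
      also have "\<dots> = (1 / fact k) *\<^sub>R (mpow ((s + t) *\<^sub>R A) k $ i $ j)"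
        unfolding exp_coeff_add mpow_scale vector_scaleR_component by (simp add: scaleR_conv_of_real)
      finally show ?thesis .
    qed
    have "(mexp (s *\<^sub>R A) ** mexp (t *\<^sub>R A)) $ i $ j = (\<Sum>l\<in>UNIV. me (s *\<^sub>R A) i l * me (t *\<^sub>R A) l j)"
      by (simp add: matrix_matrix_mult_def mexp_entry)
    also have "\<dots> = (\<Sum>l\<in>UNIV. \<Sum>k. \<Sum>p\<le>k. a l p * b l (k - p))"
      using prod by simp
    also have "\<dots> = (\<Sum>k. \<Sum>l\<in>UNIV. \<Sum>p\<le>k. a l p * b l (k - p))"
      by (rule suminf_sum[symmetric]) (rule summ)
    also have "\<dots> = me ((s + t) *\<^sub>R A) i j"
      unfolding trm me_def ..
    finally have "(mexp (s *\<^sub>R A) ** mexp (t *\<^sub>R A)) $ i $ j = mexp ((s + t) *\<^sub>R A) $ i $ j"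
      by (simp add: mexp_entry)
  }
  note eq = this
  show ?thesis
    by (simp add: Finite_Cartesian_Product.vec_eq_iff eq)
qed

lemmas fvec_eq_iff = Finite_Cartesian_Product.vec_eq_iff

lemma me_scale_powser:
  "me (t *\<^sub>R A) i j = (\<Sum>k. (mpow A k $ i $ j / of_real (fact k)) * (complex_of_real t)^k)"
  unfolding me_def mpow_scale vector_scaleR_component
  by (simp add: scaleR_conv_of_real field_simps)

lemma summable_powser_entry: "summable (\<lambda>k. (mpow A k $ i $ j / of_real (fact k)) * (y::complex)^k)"
proof (rule summable_norm_cancel, rule summable_comparison_test[OF _ summable_exp[of "mnorm A * norm y"]])
  show "\<exists>N. \<forall>n\<ge>N. norm (norm (mpow A n $ i $ j / of_real (fact n) * y ^ n)) \<le> inverse (fact n) * (mnorm A * norm y) ^ n"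
  proof (intro exI allI impI)
    fix n :: nat
    have "norm (mpow A n $ i $ j / of_real (fact n) * y ^ n) = norm (mpow A n $ i $ j) * norm y ^ n / fact n"
      by (simp add: norm_mult norm_divide norm_power)
    also have "\<dots> \<le> mnorm A ^ n * norm y ^ n / fact n"
      by (intro divide_right_mono mult_right_mono mpow_entry_bound) auto
    also have "\<dots> = inverse (fact n) * (mnorm A * norm y) ^ n"
      by (simp add: power_mult_distrib field_simps)
    finally show "norm (norm (mpow A n $ i $ j / of_real (fact n) * y ^ n)) \<le> inverse (fact n) * (mnorm A * norm y) ^ n"
      by simp
  qed
qed

lemma cont_mexp: "continuous_on UNIV (\<lambda>t::real. mexp (t *\<^sub>R A))"
proof -
  have eq: "(\<lambda>t::real. mexp (t *\<^sub>R A)) = (\<lambda>t. \<chi> i j. (\<Sum>k. (mpow A k $ i $ j / of_real (fact k)) * (complex_of_real t)^k))"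
    by (rule ext, simp only: fvec_eq_iff vec_lambda_beta mexp_entry me_scale_powser, simp)
  show ?thesis unfolding eq
  proof (intro continuous_on_vec_lambda continuous_at_imp_continuous_on ballI)
    fix i j and x :: real
    show "isCont (\<lambda>t. \<Sum>k. mpow A k $ i $ j / complex_of_real (fact k) * complex_of_real t ^ k) x"
      by (rule isCont_o2[where f = complex_of_real, OF _ isCont_powser_converges_everywhere[OF summable_powser_entry]]) auto
  qed
qed

lemma mexp_zero: "mexp (0::complex^'n^'n) = vI"
proof -
  have "me (0 *\<^sub>R (0::complex^'n^'n)) i j = vI $ i $ j" for i j
    unfolding me_scale_powser of_real_0 powser_zero by (simp add: Finite_Cartesian_Product.mat_def)
  then show ?thesis by (simp add: fvec_eq_iff mexp_entry)
qed

lemma sum_UNIV_plus: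
  "(\<Sum>x\<in>(UNIV::('a::finite + 'b::finite) set). f x) = (\<Sum>a\<in>UNIV. f (Inl a)) + (\<Sum>b\<in>UNIV. f (Inr b))"
proof -
  have U: "(UNIV::('a + 'b) set) = range Inl \<union> range Inr"
    by (metis UNIV_Plus_UNIV Plus_def)
  show ?thesis unfolding U
    by (subst sum.union_disjoint) (auto simp: sum.reindex)
qed

lemma bd_entries[simp]:
  "blockdiag A B $ Inl a $ Inl b = A $ a $ b"
  "blockdiag A B $ Inr c $ Inr d = B $ c $ d"
  "blockdiag A B $ Inl a $ Inr d = 0"
  "blockdiag A B $ Inr c $ Inl b = 0"
  by (simp_all add: blockdiag_def)

lemma bd_eqI:
  fixes M :: "complex^('n::finite + 'p::finite)^('n + 'p)"
  assumes "\<And>a b. M $ Inl a $ Inl b = A $ a $ b" "\<And>c d. M $ Inr c $ Inr d = B $ c $ d"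
    "\<And>a d. M $ Inl a $ Inr d = 0" "\<And>c b. M $ Inr c $ Inl b = 0"
  shows "M = blockdiag A B"
  unfolding fvec_eq_iff
proof (intro allI)
  fix x y :: "'n + 'p"
  show "M $ x $ y = blockdiag A B $ x $ y"
    by (cases x; cases y) (simp_all add: assms)
qed

lemma bd_mult: "blockdiag A B ** blockdiag C D = blockdiag (A ** C) (B ** D)"
  by (rule bd_eqI) (simp_all add: matrix_matrix_mult_def sum_UNIV_plus)

lemma bd_one: "blockdiag (vI::complex^'n^'n) (vI::complex^'p^'p) = vI"
  by (rule sym, rule bd_eqI) (simp_all add: Finite_Cartesian_Product.mat_def)

lemma bd_scale: "c *\<^sub>R blockdiag A B = blockdiag (c *\<^sub>R A) (c *\<^sub>R B)"
  by (rule bd_eqI) simp_all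

lemma mpow_bd: "mpow (blockdiag A B) k = blockdiag (mpow A k) (mpow B k)"
  by (induction k) (simp_all add: bd_mult bd_one)

lemma mexp_bd: "mexp (blockdiag A B) = blockdiag (mexp A) (mexp B)"
  by (rule bd_eqI) (simp_all add: mexp_entry me_def mpow_bd)

lemma blk_bd[simp]: "blk1 (blockdiag A B) = A" "blk2 (blockdiag A B) = B"
  by (simp_all add: blk1_def blk2_def fvec_eq_iff)




lemma tendsto_det:
  fixes f :: "'a \<Rightarrow> complex^'n^'n"
  assumes "(f \<longlongrightarrow> A) F"
  shows "((\<lambda>x. Determinants.det (f x)) \<longlongrightarrow> Determinants.det A) F"
  unfolding Determinants.det_def
  by (intro tendsto_intros tendsto_vec_nth assms)

lemma bounded_linear_mmult_right: "bounded_linear (\<lambda>B::complex^'n^'m. B ** (N::complex^'p^'n))"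
proof -
  have "linear (\<lambda>B::complex^'n^'m. B ** N)"
    by (rule linearI) (simp_all add: matrix_matrix_mult_def fvec_eq_iff sum.distrib algebra_simps scaleR_sum_right)
  then show ?thesis by (simp add: linear_conv_bounded_linear)
qed

lemma bounded_linear_mmult_left: "bounded_linear (\<lambda>B::complex^'p^'n. (N::complex^'n^'m) ** B)"
proof -
  have "linear (\<lambda>B::complex^'p^'n. N ** B)"
    by (rule linearI) (simp_all add: matrix_add_ldistrib matrix_scalar_ac scalar_matrix_assoc[symmetric])
  then show ?thesis by (simp add: linear_conv_bounded_linear)
qed

lemma one_param_diff:
  fixes \<phi> :: "real \<Rightarrow> complex^'m^'m"
  assumes cont: "continuous_on UNIV \<phi>" and \<phi>0: "\<phi> 0 = vI"
    and hom: "\<And>s t. \<phi> (s + t) = \<phi> s ** \<phi> t"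
  shows "\<exists>D. (\<phi> has_vector_derivative D) (at 0)"
proof -
  define F where "F x = integral {-2..x} \<phi>" for x
  have intg: "\<phi> integrable_on {a..b}" for a b
    by (rule integrable_continuous_real) (rule continuous_on_subset[OF cont], simp)
  have FD: "(F has_vector_derivative \<phi> x) (at x)" if "-2 < x" "x < 5" for x
  proof -
    have "(F has_vector_derivative \<phi> x) (at x within {-2..5})"
      unfolding F_def
      by (rule integral_has_vector_derivative) (use that in \<open>auto intro: continuous_on_subset[OF cont]\<close>)
    moreover have "at x within {-2..5} = at x"
      by (rule at_within_interior) (use that in simp)
    ultimately show ?thesis by simp
  qed
  have Fint: "integral {a..b} \<phi> = F b - F a" if "-2 \<le> a" "a \<le> b" for a b
    using Henstock_Kurzweil_Integration.integral_combine[OF that intg[of "-2" b]] unfolding F_def by (simp add: algebra_simps)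
  have lim: "((\<lambda>y. (F y - F 0) /\<^sub>R y) \<longlongrightarrow> \<phi> 0) (at_right 0)"
  proof -
    have "(F has_vector_derivative \<phi> 0) (at 0 within {0<..})"
      using FD[of 0] by (simp add: has_vector_derivative_at_within)
    then have "((\<lambda>y. (1 / norm (y - 0)) *\<^sub>R (F y - (F 0 + (y - 0) *\<^sub>R \<phi> 0))) \<longlongrightarrow> 0) (at_right 0)"
      unfolding has_vector_derivative_def has_derivative_within by simp
    then have "((\<lambda>y. (F y - F 0) /\<^sub>R y - \<phi> 0) \<longlongrightarrow> 0) (at_right 0)"
    proof (rule Lim_transform_eventually)
      show "\<forall>\<^sub>F y in at_right 0. (1 / norm (y - 0)) *\<^sub>R (F y - (F 0 + (y - 0) *\<^sub>R \<phi> 0)) = (F y - F 0) /\<^sub>R y - \<phi> 0"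
        by (rule eventually_at_rightI[of 0 1]) (auto simp: algebra_simps divide_simps)
    qed
    then have "((\<lambda>y. ((F y - F 0) /\<^sub>R y - \<phi> 0) + \<phi> 0) \<longlongrightarrow> 0 + \<phi> 0) (at_right 0)"
      by (intro tendsto_add tendsto_const)
    then show ?thesis by simp
  qed
  have "((\<lambda>y. Determinants.det ((F y - F 0) /\<^sub>R y)) \<longlongrightarrow> Determinants.det (\<phi> 0)) (at_right 0)"
    by (rule tendsto_det[OF lim])
  moreover have "Determinants.det (\<phi> 0) = 1" using \<phi>0 by simp
  ultimately have ev: "\<forall>\<^sub>F y in at_right 0. Determinants.det ((F y - F 0) /\<^sub>R y) \<noteq> 0"
    using tendsto_imp_eventually_ne by fastforce
  have ev2: "\<forall>\<^sub>F y in at_right (0::real). 0 < y \<and> y < 1"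
    by (rule eventually_at_rightI[of 0 1]) auto
  obtain h where h: "0 < h" "h < 1" "Determinants.det ((F h - F 0) /\<^sub>R h) \<noteq> 0"
    using eventually_happens'[OF _ eventually_conj[OF ev ev2]] by auto
  define M where "M = integral {0..h} \<phi>"
  have M: "M = F h - F 0" unfolding M_def using h by (intro Fint) auto
  obtain N' where N': "((F h - F 0) /\<^sub>R h) ** N' = vI"
    using h(3) unfolding invertible_det_nz[symmetric] invertible_def by blast
  define N where "N = (1 / h) *\<^sub>R N'"
  have MN: "M ** N = vI"
    using N' unfolding M N_def by (simp add: matrix_scalar_ac scalar_matrix_assoc divide_inverse)
  have key: "\<phi> t ** M = F (t + h) - F t" if "t \<in> {-1<..<1}" for t
  proof -
    have "\<phi> t ** M = integral {0..h} (\<lambda>u. \<phi> t ** \<phi> u)"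
      unfolding M_def
      using integral_linear[OF intg bounded_linear_mmult_left[of "\<phi> t"]] by (simp add: o_def)
    also have "\<dots> = integral {0..h} (\<phi> \<circ> (+) t)"
      by (simp add: hom o_def)
    also have "\<dots> = integral {0 + t..h + t} \<phi>"
      by (rule integral_shift_Icc_real)
    also have "\<dots> = F (t + h) - F t"
      using that h Fint[of t "t + h"] by (simp add: add.commute)
    finally show ?thesis .
  qed
  have eq: "\<phi> t = (F (t + h) - F t) ** N" if "t \<in> {-1<..<1}" for t
  proof -
    have "\<phi> t = (\<phi> t ** M) ** N" using MN by (simp flip: matrix_mul_assoc)
    then show ?thesis using key[OF that] by simp
  qed
  have d1: "((\<lambda>t. F (t + h)) has_vector_derivative \<phi> h) (at 0)"
  proof -
    have "(((\<lambda>t. F t) \<circ> (\<lambda>t. t + h)) has_vector_derivative (1 *\<^sub>R \<phi> h)) (at 0)"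
      by (rule vector_diff_chain_at) (use h in \<open>auto intro!: derivative_eq_intros FD\<close>)
    then show ?thesis by (simp add: o_def)
  qed
  have "((\<lambda>t. (F (t + h) - F t) ** N) has_vector_derivative ((\<phi> h - \<phi> 0) ** N)) (at 0)"
    by (rule bounded_linear.has_vector_derivative[OF bounded_linear_mmult_right])
       (rule has_vector_derivative_diff[OF d1 FD], auto)
  then have "(\<phi> has_vector_derivative ((\<phi> h - \<phi> 0) ** N)) (at 0)"
    by (rule has_vector_derivative_transform_within_open[of _ _ _ "{-1<..<1}"]) (auto simp: eq)
  then show ?thesis by blast
qed




lemma rep_one:
  assumes "is_rep G \<rho>" "vI \<in> G"
  shows "\<rho> vI = vI"
proof -
  have r: "\<rho> vI = \<rho> vI ** \<rho> vI"
    using assms unfolding is_rep_def by (metis matrix_mul_lid)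
  obtain N where N: "N ** \<rho> vI = vI"
    using assms unfolding is_rep_def invertible_def by blast
  have "vI = N ** (\<rho> vI ** \<rho> vI)" using N r by simp
  also have "\<dots> = \<rho> vI" using N by (simp add: matrix_mul_assoc)
  finally show ?thesis by simp
qed

lemma mexp_scale_add: "mexp ((s + t) *\<^sub>R Y) = mexp (s *\<^sub>R Y) ** mexp (t *\<^sub>R Y)"
  by (rule mexp_add)

lemma phi_props:
  assumes rep: "is_rep G \<rho>" and clg: "compact_lie_group G" and Y: "Y \<in> lie_alg G"
  shows "continuous_on UNIV (\<lambda>t. \<rho> (mexp (t *\<^sub>R Y)))"
    "(\<lambda>t. \<rho> (mexp (t *\<^sub>R Y))) 0 = vI"
    "\<And>s t. \<rho> (mexp ((s + t) *\<^sub>R Y)) = \<rho> (mexp (s *\<^sub>R Y)) ** \<rho> (mexp (t *\<^sub>R Y))"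
proof -
  have inG: "mexp (t *\<^sub>R Y) \<in> G" for t using Y by (simp add: lie_alg_def)
  show "continuous_on UNIV (\<lambda>t. \<rho> (mexp (t *\<^sub>R Y)))"
    by (rule continuous_on_compose2[of G \<rho> UNIV "\<lambda>t. mexp (t *\<^sub>R Y)"])
       (use rep inG cont_mexp in \<open>auto simp: is_rep_def\<close>)
  show "(\<lambda>t. \<rho> (mexp (t *\<^sub>R Y))) 0 = vI"
    using rep_one[OF rep] clg by (simp add: mexp_zero compact_lie_group_def)
  show "\<rho> (mexp ((s + t) *\<^sub>R Y)) = \<rho> (mexp (s *\<^sub>R Y)) ** \<rho> (mexp (t *\<^sub>R Y))" for s t
    using rep inG unfolding is_rep_def mexp_add by blast
qed

lemma drep_has:
  assumes rep: "is_rep G \<rho>" and clg: "compact_lie_group G" and Y: "Y \<in> lie_alg G"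
  shows "((\<lambda>t. \<rho> (mexp (t *\<^sub>R Y))) has_vector_derivative drep \<rho> Y) (at 0)"
proof -
  obtain D where D: "((\<lambda>t. \<rho> (mexp (t *\<^sub>R Y))) has_vector_derivative D) (at 0)"
    using one_param_diff[OF phi_props(1-2)[OF assms]] phi_props(3)[OF assms] by blast
  then have "drep \<rho> Y = D" unfolding drep_def by (rule vector_derivative_at)
  then show ?thesis using D by simp
qed

lemma lie_alg_scale: "Y \<in> lie_alg G \<Longrightarrow> c *\<^sub>R Y \<in> lie_alg G"
  unfolding lie_alg_def by (auto simp: scaleR_scaleR)

lemma drep_scale:
  assumes rep: "is_rep G \<rho>" and clg: "compact_lie_group G" and Y: "Y \<in> lie_alg G"
  shows "drep \<rho> (c *\<^sub>R Y) = c *\<^sub>R drep \<rho> Y"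
proof -
  have "(((\<lambda>t. \<rho> (mexp (t *\<^sub>R Y))) \<circ> (\<lambda>t. c * t)) has_vector_derivative (c *\<^sub>R drep \<rho> Y)) (at 0)"
    by (rule vector_diff_chain_at) (auto intro!: derivative_eq_intros drep_has[OF assms])
  then have "((\<lambda>t. \<rho> (mexp (t *\<^sub>R (c *\<^sub>R Y)))) has_vector_derivative (c *\<^sub>R drep \<rho> Y)) (at 0)"
    by (simp add: o_def scaleR_scaleR mult.commute)
  then show ?thesis unfolding drep_def by (rule vector_derivative_at)
qed

lemma clg_one: "compact_lie_group G \<Longrightarrow> vI \<in> G"
  by (simp add: compact_lie_group_def)

lemma mexp_bd1: "mexp (t *\<^sub>R blockdiag Y (0::complex^'p^'p)) = blockdiag (mexp (t *\<^sub>R Y)) vI"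
  by (simp add: bd_scale mexp_bd mexp_zero)

lemma mexp_bd2: "mexp (t *\<^sub>R blockdiag (0::complex^'n^'n) Y) = blockdiag vI (mexp (t *\<^sub>R Y))"
  by (simp add: bd_scale mexp_bd mexp_zero)

lemma lie_alg_bd1:
  assumes "compact_lie_group G'" "Y \<in> lie_alg G"
  shows "blockdiag Y (0::complex^'p^'p) \<in> lie_alg (prod_group G (G'::(complex^'p^'p) set))"
  unfolding lie_alg_def
proof (intro CollectI allI)
  fix t
  have "mexp (t *\<^sub>R Y) \<in> G" "vI \<in> G'" using assms by (auto simp: lie_alg_def clg_one)
  then show "mexp (t *\<^sub>R blockdiag Y 0) \<in> prod_group G G'"
    unfolding mexp_bd1 prod_group_def by blast
qed

lemma lie_alg_bd2:
  assumes "compact_lie_group G" "Y \<in> lie_alg G'"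
  shows "blockdiag (0::complex^'n^'n) Y \<in> lie_alg (prod_group (G::(complex^'n^'n) set) G')"
  unfolding lie_alg_def
proof (intro CollectI allI)
  fix t
  have "mexp (t *\<^sub>R Y) \<in> G'" "vI \<in> G" using assms by (auto simp: lie_alg_def clg_one)
  then show "mexp (t *\<^sub>R blockdiag 0 Y) \<in> prod_group G G'"
    unfolding mexp_bd2 prod_group_def by blast
qed

lemma kron_eqI: "(\<And>p q. M $ p $ q = A $ fst p $ fst q * B $ snd p $ snd q) \<Longrightarrow> M = kron A B"
  by (simp add: kron_def fvec_eq_iff)

lemma kron_entry[simp]: "kron A B $ p $ q = A $ fst p $ fst q * B $ snd p $ snd q"
  by (simp add: kron_def)

lemma bounded_linear_kron_left: "bounded_linear (\<lambda>A. kron A C)"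
proof -
  have "linear (\<lambda>A. kron A C)"
    by (rule linearI) (simp_all add: fvec_eq_iff algebra_simps mult_scaleR_left mult_scaleR_right)
  then show ?thesis by (simp add: linear_conv_bounded_linear)
qed

lemma bounded_linear_kron_right: "bounded_linear (\<lambda>B. kron C B)"
proof -
  have "linear (\<lambda>B. kron C B)"
    by (rule linearI) (simp_all add: fvec_eq_iff algebra_simps mult_scaleR_left mult_scaleR_right)
  then show ?thesis by (simp add: linear_conv_bounded_linear)
qed

lemma drep_tensor1:
  assumes rep: "is_rep G \<rho>" "is_rep G' \<rho>'" and clg: "compact_lie_group G" "compact_lie_group G'"
    and Y: "Y \<in> lie_alg G"
  shows "drep (tensor_rep \<rho> \<rho>') (blockdiag Y 0) = kron (drep \<rho> Y) vI"
proof -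
  have eq: "(\<lambda>t. tensor_rep \<rho> \<rho>' (mexp (t *\<^sub>R blockdiag Y 0))) = (\<lambda>t. kron (\<rho> (mexp (t *\<^sub>R Y))) vI)"
    using rep_one[OF rep(2) clg_one[OF clg(2)]] by (simp add: tensor_rep_def mexp_bd1)
  have "((\<lambda>t. kron (\<rho> (mexp (t *\<^sub>R Y))) vI) has_vector_derivative kron (drep \<rho> Y) vI) (at 0)"
    by (rule bounded_linear.has_vector_derivative[OF bounded_linear_kron_left drep_has[OF rep(1) clg(1) Y]])
  then show ?thesis unfolding drep_def eq by (rule vector_derivative_at)
qed

lemma drep_tensor2:
  assumes rep: "is_rep G \<rho>" "is_rep G' \<rho>'" and clg: "compact_lie_group G" "compact_lie_group G'"
    and Y: "Y \<in> lie_alg G'"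
  shows "drep (tensor_rep \<rho> \<rho>') (blockdiag 0 Y) = kron vI (drep \<rho>' Y)"
proof -
  have eq: "(\<lambda>t. tensor_rep \<rho> \<rho>' (mexp (t *\<^sub>R blockdiag 0 Y))) = (\<lambda>t. kron vI (\<rho>' (mexp (t *\<^sub>R Y))))"
    using rep_one[OF rep(1) clg_one[OF clg(1)]] by (simp add: tensor_rep_def mexp_bd2)
  have "((\<lambda>t. kron vI (\<rho>' (mexp (t *\<^sub>R Y)))) has_vector_derivative kron vI (drep \<rho>' Y)) (at 0)"
    by (rule bounded_linear.has_vector_derivative[OF bounded_linear_kron_right drep_has[OF rep(2) clg(2) Y]])
  then show ?thesis unfolding drep_def eq by (rule vector_derivative_at)
qed

lemma sum_UNIV_prod: "(\<Sum>r\<in>(UNIV::('a::finite \<times> 'b::finite) set). f r) = (\<Sum>r1\<in>UNIV. \<Sum>r2\<in>UNIV. f (r1, r2))"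
  by (simp add: sum.cartesian_product)

lemma kron_mult: "kron A B ** kron C D = kron (A ** C) (B ** D)"
proof (rule kron_eqI)
  fix p q :: "'a \<times> 'b"
  have "(kron A B ** kron C D) $ p $ q = (\<Sum>r\<in>UNIV \<times> UNIV. A $ fst p $ fst r * B $ snd p $ snd r * (C $ fst r $ fst q * D $ snd r $ snd q))"
    by (simp add: matrix_matrix_mult_def)
  also have "\<dots> = (\<Sum>r1\<in>UNIV. \<Sum>r2\<in>UNIV. (A $ fst p $ r1 * C $ r1 $ fst q) * (B $ snd p $ r2 * D $ r2 $ snd q))"
    by (simp add: sum_UNIV_prod algebra_simps)
  also have "\<dots> = (A ** C) $ fst p $ fst q * (B ** D) $ snd p $ snd q"
    by (simp add: matrix_matrix_mult_def sum_product)
  finally show "(kron A B ** kron C D) $ p $ q = (A ** C) $ fst p $ fst q * (B ** D) $ snd p $ snd q" .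
qed

lemma kron_one: "kron (vI::complex^'m^'m) (vI::complex^'q^'q) = vI"
  by (rule sym, rule kron_eqI) (auto simp: Finite_Cartesian_Product.mat_def prod_eq_iff)

lemma kron_simps:
  "kron (A + A') B = kron A B + kron A' B"
  "kron A (B + B') = kron A B + kron A B'"
  "kron (c *\<^sub>R A) B = c *\<^sub>R kron A B"
  "kron A (c *\<^sub>R B) = c *\<^sub>R kron A B"
  "kron 0 B = 0" "kron A 0 = 0"
  "kron (A - A') B = kron A B - kron A' B"
  "kron A (B - B') = kron A B - kron A B'"
  "kron (- A) B = - kron A B"
  "kron A (- B) = - kron A B"
  by (simp_all add: fvec_eq_iff algebra_simps mult_scaleR_left mult_scaleR_right)

lemma D_op_Nil[simp]: "D_op \<rho> [] = 0"
  by (simp add: D_op_def)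

lemma D_op_Cons[simp]: "D_op \<rho> ((Y, Z) # s) = (- 1 / 2 :: real) *\<^sub>R (drep \<rho> Y ** drep \<rho> Z + drep \<rho> Z ** drep \<rho> Y) + D_op \<rho> s"
  by (simp add: D_op_def)

lemma D_op_append: "D_op \<rho> (s1 @ s2) = D_op \<rho> s1 + D_op \<rho> s2"
  by (simp add: D_op_def)

lemma D_op_embed1:
  assumes rep: "is_rep G \<rho>" "is_rep G' \<rho>'" and clg: "compact_lie_group G" "compact_lie_group G'"
    and s: "sym2_elem G s"
  shows "D_op (tensor_rep \<rho> \<rho>') (map (\<lambda>(Y, Z). (blockdiag (c *\<^sub>R Y) 0, blockdiag Z 0)) s) = c *\<^sub>R kron (D_op \<rho> s) vI"
  using s
proof (induction s)
  case Nil
  then show ?case by (simp add: kron_simps)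
next
  case (Cons yz s)
  obtain Y Z where yz: "yz = (Y, Z)" by (cases yz)
  have Y: "Y \<in> lie_alg G" and Z: "Z \<in> lie_alg G" and s: "sym2_elem G s"
    using Cons.prems by (auto simp: sym2_elem_def yz)
  have d1: "drep (tensor_rep \<rho> \<rho>') (blockdiag (c *\<^sub>R Y) 0) = c *\<^sub>R kron (drep \<rho> Y) vI"
    using drep_tensor1[OF rep clg lie_alg_scale[OF Y, of c]] drep_scale[OF rep(1) clg(1) Y]
    by (simp add: kron_simps)
  have d2: "drep (tensor_rep \<rho> \<rho>') (blockdiag Z 0) = kron (drep \<rho> Z) vI"
    using drep_tensor1[OF rep clg Z] .
  show ?case
    using Cons.IH[OF s]
    by (simp add: yz d1 d2 kron_mult kron_simps matrix_scalar_ac scalar_matrix_assoc[symmetric] algebra_simps)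
qed

lemma D_op_embed2:
  assumes rep: "is_rep G \<rho>" "is_rep G' \<rho>'" and clg: "compact_lie_group G" "compact_lie_group G'"
    and s: "sym2_elem G' s"
  shows "D_op (tensor_rep \<rho> \<rho>') (map (\<lambda>(Y, Z). (blockdiag 0 (c *\<^sub>R Y), blockdiag 0 Z)) s) = c *\<^sub>R kron vI (D_op \<rho>' s)"
  using s
proof (induction s)
  case Nil
  then show ?case by (simp add: kron_simps)
next
  case (Cons yz s)
  obtain Y Z where yz: "yz = (Y, Z)" by (cases yz)
  have Y: "Y \<in> lie_alg G'" and Z: "Z \<in> lie_alg G'" and s: "sym2_elem G' s"
    using Cons.prems by (auto simp: sym2_elem_def yz)
  have d1: "drep (tensor_rep \<rho> \<rho>') (blockdiag 0 (c *\<^sub>R Y)) = c *\<^sub>R kron vI (drep \<rho>' Y)"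
    using drep_tensor2[OF rep clg lie_alg_scale[OF Y, of c]] drep_scale[OF rep(2) clg(2) Y]
    by (simp add: kron_simps)
  have d2: "drep (tensor_rep \<rho> \<rho>') (blockdiag 0 Z) = kron vI (drep \<rho>' Z)"
    using drep_tensor2[OF rep clg Z] .
  show ?case
    using Cons.IH[OF s]
    by (simp add: yz d1 d2 kron_mult kron_simps matrix_scalar_ac scalar_matrix_assoc[symmetric] algebra_simps)
qed

lemma sym2_embed1:
  assumes "compact_lie_group G'" "sym2_elem G s"
  shows "sym2_elem (prod_group G (G'::(complex^'p^'p) set)) (map (\<lambda>(Y, Z). (blockdiag (c *\<^sub>R Y) (0::complex^'p^'p), blockdiag Z 0)) s)"
  using assms unfolding sym2_elem_def by (auto intro!: lie_alg_bd1 lie_alg_scale)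

lemma sym2_embed2:
  assumes "compact_lie_group G" "sym2_elem G' s"
  shows "sym2_elem (prod_group (G::(complex^'n^'n) set) G') (map (\<lambda>(Y, Z). (blockdiag (0::complex^'n^'n) (c *\<^sub>R Y), blockdiag 0 Z)) s)"
  using assms unfolding sym2_elem_def by (auto intro!: lie_alg_bd2 lie_alg_scale)

lemma sym2_append: "sym2_elem G (s1 @ s2) \<longleftrightarrow> sym2_elem G s1 \<and> sym2_elem G s2"
  by (auto simp: sym2_elem_def)




definition rootpoly :: "('a::finite \<Rightarrow> complex) \<Rightarrow> complex poly" where
  "rootpoly d = (\<Prod>i\<in>UNIV. [:d i:] - [:0, 1:])"

definition liftm :: "complex^'n^'m \<Rightarrow> complex poly^'n^'m" where
  "liftm A = (\<chi> i j. [:A $ i $ j:])"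

lemma liftm_entry[simp]: "liftm A $ i $ j = [:A $ i $ j:]"
  by (simp add: liftm_def)

lemma const_poly_sum: "(\<Sum>x\<in>S. [:f x:]) = [:(\<Sum>x\<in>S. f x):]"
  by (induction S rule: infinite_finite_induct) auto

lemma liftm_mult: "liftm (A ** B) = liftm A ** liftm B"
  by (simp add: fvec_eq_iff matrix_matrix_mult_def const_poly_sum mult.commute)

lemma liftm_one: "liftm (vI::complex^'n^'n) = Finite_Cartesian_Product.mat 1"
  by (simp add: fvec_eq_iff Finite_Cartesian_Product.mat_def)

lemma char_pol_liftm: "char_pol A = Determinants.det (liftm A - Finite_Cartesian_Product.mat [:0, 1:])"
  unfolding char_pol_def
  by (rule arg_cong[where f = Determinants.det]) (simp add: fvec_eq_iff Finite_Cartesian_Product.mat_def)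

lemma mat_x_sandwich:
  fixes P :: "complex poly^'n^'n"
  shows "P ** Finite_Cartesian_Product.mat x ** Q = (\<chi> i j. x * (P ** Q) $ i $ j)"
  by (simp add: fvec_eq_iff matrix_matrix_mult_def Finite_Cartesian_Product.mat_def if_distrib
      if_distribR sum_distrib_left algebra_simps cong: if_cong)

lemma char_pol_sim:
  fixes P T Q :: "complex^'n^'n"
  assumes PQ: "P ** Q = vI"
  shows "char_pol (P ** T ** Q) = char_pol T"
proof -
  let ?X = "Finite_Cartesian_Product.mat [:0, 1:] :: complex poly^'n^'n"
  have l: "liftm P ** liftm Q = Finite_Cartesian_Product.mat 1"
    using PQ by (metis liftm_mult liftm_one)
  have "liftm (P ** T ** Q) - ?X = liftm P ** (liftm T - ?X) ** liftm Q"
  proof -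
    have "liftm P ** ?X ** liftm Q = ?X"
      unfolding mat_x_sandwich l by (simp add: fvec_eq_iff Finite_Cartesian_Product.mat_def)
    moreover have "liftm P ** (liftm T - ?X) ** liftm Q = liftm P ** liftm T ** liftm Q - liftm P ** ?X ** liftm Q"
      by (simp add: matrix_matrix_mult_def fvec_eq_iff sum_subtractf algebra_simps)
    ultimately show ?thesis by (simp add: liftm_mult)
  qed
  then have "char_pol (P ** T ** Q) = Determinants.det (liftm P) * Determinants.det (liftm T - ?X) * Determinants.det (liftm Q)"
    unfolding char_pol_liftm by (simp add: det_mul)
  also have "\<dots> = Determinants.det (liftm P ** liftm Q) * Determinants.det (liftm T - ?X)"
    by (simp add: det_mul)
  also have "\<dots> = char_pol T"
    unfolding l char_pol_liftm by simp
  finally show ?thesis .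
qed

lemma perm_rank_decrease:
  fixes r :: "'n::finite \<Rightarrow> nat"
  assumes "inj r" "p permutes (UNIV::'n set)" "p \<noteq> id"
  shows "\<exists>i. r (p i) < r i"
proof (rule ccontr)
  assume "\<not> ?thesis"
  then have le: "\<forall>i. r i \<le> r (p i)" by (simp add: not_less)
  obtain j where j: "p j \<noteq> j" using assms(3) by (metis eq_id_iff)
  have "r j \<noteq> r (p j)" using j assms(1) by (metis injD)
  then have lt: "r j < r (p j)" using le by (metis order.not_eq_order_implies_strict)
  have "(\<Sum>i\<in>UNIV. r i) < (\<Sum>i\<in>UNIV. r (p i))"
    by (rule sum_strict_mono_ex1) (use le lt in auto)
  moreover have "(\<Sum>i\<in>UNIV. r (p i)) = (\<Sum>i\<in>UNIV. r i)"
    using sum.permute[OF assms(2), of r] by (simp add: o_def)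
  ultimately show False by simp
qed

lemma det_triangular_rank:
  fixes M :: "'a::comm_ring_1^'n^'n" and r :: "'n \<Rightarrow> nat"
  assumes r: "inj r" and z: "\<And>i j. r j < r i \<Longrightarrow> M $ i $ j = 0"
  shows "Determinants.det M = (\<Prod>i\<in>UNIV. M $ i $ i)"
proof -
  have "Determinants.det M = (\<Sum>p\<in>{p. p permutes (UNIV::'n set)}. if p = id then (\<Prod>i\<in>UNIV. M $ i $ i) else 0)"
    unfolding Determinants.det_def
  proof (rule sum.cong[OF refl])
    fix p assume p: "p \<in> {p. p permutes (UNIV::'n set)}"
    show "of_int (sign p) * (\<Prod>i\<in>UNIV. M $ i $ p i) = (if p = id then \<Prod>i\<in>UNIV. M $ i $ i else 0)"
    proof (cases "p = id")
      case True then show ?thesis by (simp add: sign_id)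
    next
      case False
      then obtain i where "r (p i) < r i" using perm_rank_decrease[OF r] p by auto
      then have "M $ i $ p i = 0" by (rule z)
      then have "(\<Prod>i\<in>UNIV. M $ i $ p i) = 0" by (intro prod_zero) auto
      then show ?thesis using False by simp
    qed
  qed
  also have "\<dots> = (\<Prod>i\<in>UNIV. M $ i $ i)"
    by (simp add: permutes_id)
  finally show ?thesis .
qed

lemma char_pol_triangular:
  fixes T :: "complex^'n^'n" and r :: "'n \<Rightarrow> nat"
  assumes r: "inj r" and z: "\<And>i j. r j < r i \<Longrightarrow> T $ i $ j = 0"
  shows "char_pol T = rootpoly (\<lambda>i. T $ i $ i)"
  unfolding char_pol_def rootpoly_def
  by (subst det_triangular_rank[OF r]) (auto simp: z)

lemma schur_vec:
  fixes A :: "complex^'m^'m"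
  shows "\<exists>P T Q (r::'m \<Rightarrow> nat). A = P ** T ** Q \<and> P ** Q = vI \<and> inj r \<and> (\<forall>i. r i < CARD('m))
            \<and> (\<forall>i j. r j < r i \<longrightarrow> T $ i $ j = 0)"
proof -
  let ?n = "CARD('m)"
  obtain h where h: "bij_betw h (UNIV::'m set) {0..<?n}"
    using ex_bij_betw_finite_nat[of "UNIV::'m set"] by auto
  define g where "g = inv_into UNIV h"
  have hinj: "inj h" using h by (simp add: bij_betw_def)
  have hlt: "h i < ?n" for i using h by (auto simp: bij_betw_def)
  have gh: "g (h i) = i" for i using hinj by (simp add: g_def inv_into_f_f)
  have hg: "h (g k) = k" if "k < ?n" for k
    using that h unfolding g_def bij_betw_def by (auto intro: f_inv_into_f)
  define toJ where "toJ = Matrix.mat ?n ?n (\<lambda>(k, l). A $ g k $ g l)"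
  define toV :: "complex Matrix.mat \<Rightarrow> complex^'m^'m" where "toV M = (\<chi> i j. M $$ (h i, h j))" for M
  have J: "toJ \<in> carrier_mat ?n ?n" unfolding toJ_def by simp
  have VJ: "toV toJ = A" unfolding toV_def toJ_def by (simp add: fvec_eq_iff hlt gh)
  have Vmult: "toV (M * N) = toV M ** toV N" if "M \<in> carrier_mat ?n ?n" "N \<in> carrier_mat ?n ?n" for M N
  proof -
    have "(M * N) $$ (h i, h j) = (\<Sum>l\<in>UNIV. M $$ (h i, h l) * N $$ (h l, h j))" for i j
    proof -
      have "(M * N) $$ (h i, h j) = (\<Sum>k\<in>{0..<?n}. M $$ (h i, k) * N $$ (k, h j))"
        using that hlt by (simp add: scalar_prod_def)
      also have "\<dots> = (\<Sum>l\<in>UNIV. M $$ (h i, h l) * N $$ (h l, h j))"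
        by (rule sum.reindex_bij_betw[OF h, symmetric])
      finally show ?thesis .
    qed
    then show ?thesis unfolding toV_def by (simp add: fvec_eq_iff matrix_matrix_mult_def)
  qed
  have Vone: "toV (1\<^sub>m ?n) = vI"
    unfolding toV_def by (simp add: fvec_eq_iff hlt Finite_Cartesian_Product.mat_def inj_eq[OF hinj])
  obtain es where es: "char_poly toJ = (\<Prod>e\<leftarrow>es. [:- e, 1:])"
    using char_poly_factorized[OF J] by auto
  obtain B P Q where sd: "schur_decomposition toJ es = (B, P, Q)"
    by (cases "schur_decomposition toJ es") auto
  have sim: "similar_mat_wit toJ B P Q" and ut: "upper_triangular B"
    using schur_decomposition[OF J es sd] by auto
  have dJ: "dim_row toJ = ?n" using J by simp
  have car: "B \<in> carrier_mat ?n ?n" "P \<in> carrier_mat ?n ?n" "Q \<in> carrier_mat ?n ?n"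
    and PQ: "P * Q = 1\<^sub>m ?n" and eqJ: "toJ = P * B * Q"
    using sim unfolding similar_mat_wit_def dJ Let_def by auto
  have "toV (P * B * Q) = toV (P * B) ** toV Q"
    by (rule Vmult) (use car in auto)
  moreover have "toV (P * B) = toV P ** toV B"
    by (rule Vmult) (use car in auto)
  ultimately have "A = toV P ** toV B ** toV Q"
    using VJ unfolding eqJ by simp
  moreover have "toV P ** toV Q = vI"
    using Vmult[OF car(2,3)] PQ Vone by simp
  moreover have "toV B $ i $ j = 0" if "h j < h i" for i j
    using ut that hlt car(1) unfolding toV_def by auto
  ultimately show ?thesis using hinj hlt by blast
qed

lemma lex_inj:
  fixes x y x' y' N :: nat
  assumes "y < N" "y' < N" "x * N + y = x' * N + y'"
  shows "x = x' \<and> y = y'"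
proof -
  have N: "N > 0" using assms by auto
  have "x = (y + x * N) div N" using assms N by simp
  also have "\<dots> = (y' + x' * N) div N" using assms(3) by (simp add: add.commute)
  also have "\<dots> = x'" using assms N by simp
  finally have "x = x'" .
  then show ?thesis using assms(3) by simp
qed

lemma matrix_add_rdist: "(A + B) ** (C::complex^'p^'n) = A ** C + B ** C"
  by (simp add: matrix_matrix_mult_def fvec_eq_iff sum.distrib algebra_simps)

lemma char_pol_kron:
  fixes A :: "complex^'m^'m" and B :: "complex^'q^'q"
  shows "\<exists>(d1::'m \<Rightarrow> complex) (d2::'q \<Rightarrow> complex). char_pol A = rootpoly d1 \<and> char_pol B = rootpoly d2 \<and>
    (\<forall>c1 c2::real. char_pol (c1 *\<^sub>R kron A vI + c2 *\<^sub>R kron vI B)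
        = rootpoly (\<lambda>p. of_real c1 * d1 (fst p) + of_real c2 * d2 (snd p)))"
proof -
  obtain P1 T1 Q1 and r1 :: "'m \<Rightarrow> nat" where A: "A = P1 ** T1 ** Q1" and PQ1: "P1 ** Q1 = vI"
    and r1: "inj r1" "\<And>i. r1 i < CARD('m)" and T1: "\<And>i j. r1 j < r1 i \<Longrightarrow> T1 $ i $ j = 0"
    using schur_vec[of A] by blast
  obtain P2 T2 Q2 and r2 :: "'q \<Rightarrow> nat" where B: "B = P2 ** T2 ** Q2" and PQ2: "P2 ** Q2 = vI"
    and r2: "inj r2" "\<And>i. r2 i < CARD('q)" and T2: "\<And>i j. r2 j < r2 i \<Longrightarrow> T2 $ i $ j = 0"
    using schur_vec[of B] by blast
  define d1 where "d1 i = T1 $ i $ i" for i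
  define d2 where "d2 i = T2 $ i $ i" for i
  have cA: "char_pol A = rootpoly d1"
    unfolding A char_pol_sim[OF PQ1] d1_def by (rule char_pol_triangular[OF r1(1) T1])
  have cB: "char_pol B = rootpoly d2"
    unfolding B char_pol_sim[OF PQ2] d2_def by (rule char_pol_triangular[OF r2(1) T2])
  have PQ: "kron P1 P2 ** kron Q1 Q2 = vI"
    by (simp add: kron_mult PQ1 PQ2 kron_one)
  define r :: "'m \<times> 'q \<Rightarrow> nat" where "r p = r1 (fst p) * CARD('q) + r2 (snd p)" for p
  have rinj: "inj r"
  proof (rule injI)
    fix p p' assume "r p = r p'"
    then have "r1 (fst p) = r1 (fst p') \<and> r2 (snd p) = r2 (snd p')"
      unfolding r_def by (intro lex_inj[of _ "CARD('q)"] r2(2))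
    then show "p = p'" using r1(1) r2(1) by (metis injD prod_eq_iff)
  qed
  have "char_pol (c1 *\<^sub>R kron A vI + c2 *\<^sub>R kron vI B)
        = rootpoly (\<lambda>p. of_real c1 * d1 (fst p) + of_real c2 * d2 (snd p))" for c1 c2 :: real
  proof -
    define Mid where "Mid = c1 *\<^sub>R kron T1 (vI::complex^'q^'q) + c2 *\<^sub>R kron (vI::complex^'m^'m) T2"
    have e1: "kron P1 P2 ** kron T1 vI ** kron Q1 Q2 = kron A vI"
      by (simp add: kron_mult A PQ2)
    have e2: "kron P1 P2 ** kron vI T2 ** kron Q1 Q2 = kron vI B"
      by (simp add: kron_mult B PQ1)
    have K: "c1 *\<^sub>R kron A vI + c2 *\<^sub>R kron vI B = kron P1 P2 ** Mid ** kron Q1 Q2"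
      unfolding Mid_def e1[symmetric] e2[symmetric]
      by (simp add: matrix_add_ldistrib matrix_add_rdist matrix_scalar_ac scalar_matrix_assoc[symmetric])
    have Mz: "Mid $ p $ p' = 0" if "r p' < r p" for p p'
    proof -
      obtain a b a' b' where p: "p = (a, b)" and p': "p' = (a', b')" by (cases p, cases p')
      have ent: "Mid $ p $ p' = of_real c1 * (T1 $ a $ a' * vI $ b $ b') + of_real c2 * (vI $ a $ a' * T2 $ b $ b')"
        unfolding Mid_def p p' vector_add_component vector_scaleR_component kron_entry fst_conv snd_conv
        by (simp add: scaleR_conv_of_real)
      show ?thesis
      proof (cases "a = a'")
        case True
        then have "r2 b' < r2 b" using that unfolding p p' r_def by simp
        then show ?thesis using True T2 ent by (auto simp: Finite_Cartesian_Product.mat_def)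
      next
        case False
        show ?thesis
        proof (cases "b = b'")
          case True
          then have "r1 a' < r1 a" using that unfolding p p' r_def by simp
          then show ?thesis using False True T1 ent by (auto simp: Finite_Cartesian_Product.mat_def)
        next
          case False2: False
          then show ?thesis using False ent by (simp add: Finite_Cartesian_Product.mat_def)
        qed
      qed
    qed
    have diag: "Mid $ p $ p = of_real c1 * d1 (fst p) + of_real c2 * d2 (snd p)" for p
      unfolding Mid_def d1_def d2_def vector_add_component vector_scaleR_component kron_entry
      by (simp add: scaleR_conv_of_real Finite_Cartesian_Product.mat_def)
    have "char_pol (c1 *\<^sub>R kron A vI + c2 *\<^sub>R kron vI B) = char_pol Mid"
      unfolding K by (rule char_pol_sim[OF PQ])
    also have "\<dots> = rootpoly (\<lambda>p. Mid $ p $ p)"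
      by (rule char_pol_triangular[OF rinj Mz])
    finally show ?thesis by (simp only: diag)
  qed
  note kk = this
  show ?thesis
    by (rule exI[of _ d1], rule exI[of _ d2], intro conjI cA cB allI kk)
qed




lemma poly_rootpoly: "poly (rootpoly r) x = (\<Prod>i\<in>UNIV. r i - x)"
  by (simp add: rootpoly_def poly_prod)

lemma lin_nz: "[:a:] - [:0, 1::complex:] \<noteq> 0"
proof
  assume "[:a:] - [:0, 1::complex:] = 0"
  then have "coeff ([:a:] - [:0, 1::complex:]) 1 = 0" by simp
  then show False by simp
qed

lemma rootpoly_nz: "rootpoly r \<noteq> 0"
  unfolding rootpoly_def by (simp add: lin_nz)

lemma rootpoly_root: "poly (rootpoly r) x = 0 \<longleftrightarrow> x \<in> range r"
  unfolding poly_rootpoly by (auto simp: prod_zero_iff)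

lemma res_iff:
  fixes p q :: "complex poly"
  assumes p: "p \<noteq> 0"
  shows "resultant p q \<noteq> 0 \<longleftrightarrow> (\<forall>x. poly p x = 0 \<longrightarrow> poly q x \<noteq> 0)"
proof
  assume r: "resultant p q \<noteq> 0"
  show "\<forall>x. poly p x = 0 \<longrightarrow> poly q x \<noteq> 0"
  proof (intro allI impI notI)
    fix x assume px: "poly p x = 0" and qx: "poly q x = 0"
    have "[:- x, 1:] dvd p" "[:- x, 1:] dvd q" using px qx by (simp_all add: poly_eq_0_iff_dvd)
    then have d: "[:- x, 1:] dvd gcd p q" by simp
    have "gcd p q \<noteq> 0" using p by simp
    then have "degree [:- x, 1:] \<le> degree (gcd p q)" by (rule dvd_imp_degree_le[OF d])
    then have "degree (gcd p q) \<noteq> 0" by simp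
    then show False using r resultant_0_gcd by blast
  qed
next
  assume h: "\<forall>x. poly p x = 0 \<longrightarrow> poly q x \<noteq> 0"
  show "resultant p q \<noteq> 0"
  proof
    assume "resultant p q = 0"
    then have "degree (gcd p q) \<noteq> 0" using resultant_0_gcd by blast
    then have "\<not> constant (poly (gcd p q))" by (simp add: constant_degree)
    then obtain x where x: "poly (gcd p q) x = 0" using fundamental_theorem_of_algebra by blast
    have "poly p x = 0" using x by (metis gcd_dvd1 poly_eq_0_iff_dvd dvd_trans)
    moreover have "poly q x = 0" using x by (metis gcd_dvd2 poly_eq_0_iff_dvd dvd_trans)
    ultimately show False using h by blast
  qed
qed

lemma res_rootpoly_iff:
  "resultant (rootpoly r) q \<noteq> 0 \<longleftrightarrow> (\<forall>i. poly q (r i) \<noteq> 0)"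
  using res_iff[OF rootpoly_nz, of r q] rootpoly_root[of r] by auto

definition mult_at :: "('i::finite \<Rightarrow> complex) \<Rightarrow> complex \<Rightarrow> nat" where
  "mult_at r x = card {i. r i = x}"

definition rest_poly :: "('i::finite \<Rightarrow> complex) \<Rightarrow> complex \<Rightarrow> complex poly" where
  "rest_poly r x = (\<Prod>i\<in>{i. r i \<noteq> x}. [:r i:] - [:0, 1:])"

definition Ssum :: "('i::finite \<Rightarrow> complex) \<Rightarrow> complex \<Rightarrow> complex" where
  "Ssum r x = (\<Sum>i\<in>UNIV. 1 / (r i - x))"

lemma rootpoly_split: "rootpoly r = ([:x:] - [:0, 1:]) ^ mult_at r x * rest_poly r x"
proof -
  have U: "(UNIV::'a set) = {i. r i = x} \<union> {i. r i \<noteq> x}" by auto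
  have "rootpoly r = (\<Prod>i\<in>{i. r i = x}. [:r i:] - [:0, 1:]) * rest_poly r x"
    unfolding rootpoly_def rest_poly_def by (subst U, subst prod.union_disjoint) auto
  also have "(\<Prod>i\<in>{i. r i = x}. [:r i:] - [:0, 1:]) = (\<Prod>i\<in>{i. r i = x}. [:x:] - [:0, 1:])"
    by (rule prod.cong) auto
  also have "\<dots> = ([:x:] - [:0, 1:]) ^ mult_at r x"
    unfolding mult_at_def by (rule prod_constant)
  finally show ?thesis .
qed

lemma rest_poly_nz_at: "poly (rest_poly r x) x \<noteq> 0"
  unfolding rest_poly_def by (simp add: poly_prod)

lemma neg1: "(-1 :: complex poly) = [:-1:]"
  by (rule poly_eqI) (simp add: coeff_1 coeff_pCons split: nat.split)

lemma lin_eq: "[:a:] - [:0, 1::complex:] = [:a, -1:]"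
  by (simp add: neg1)

lemma pderiv_lin: "pderiv [:a, -1::complex:] = -1"
  by (simp add: pderiv_pCons neg1)

lemma dummy_unused: "True"
  by (simp add: pderiv_pCons)

lemma derL1: "poly (pderiv ([:x, -1:] * h)) x = - poly h (x::complex)"
  unfolding pderiv_mult pderiv_lin poly_add poly_mult by simp

lemma derL2: "poly (pderiv (pderiv ([:x, -1:] * h))) x = - 2 * poly (pderiv h) (x::complex)"
proof -
  have a: "pderiv ([:x, -1:] * h) = [:x, -1:] * pderiv h - h"
    unfolding pderiv_mult pderiv_lin by simp
  have b: "pderiv ([:x, -1:] * pderiv h - h) = [:x, -1:] * pderiv (pderiv h) - pderiv h - pderiv h"
    by (simp only: pderiv_diff pderiv_add pderiv_minus pderiv_mult pderiv_lin mult_minus1_right diff_conv_add_uminus)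
  have "poly (pderiv (pderiv ([:x, -1:] * h))) x = poly ([:x, -1:] * pderiv (pderiv h) - pderiv h - pderiv h) x"
    by (simp only: a b)
  then show ?thesis unfolding poly_diff poly_mult by simp
qed

lemma rest_poly_deriv_at:
  "poly (pderiv (rest_poly r x)) x = - poly (rest_poly r x) x * Ssum r x"
proof -
  let ?S = "{i. r i \<noteq> x}"
  have "poly (pderiv (rest_poly r x)) x = (\<Sum>a\<in>?S. (\<Prod>j\<in>?S - {a}. r j - x) * (-1))"
    unfolding rest_poly_def pderiv_prod lin_eq pderiv_lin poly_sum poly_mult poly_prod by simp
  also have "\<dots> = (\<Sum>a\<in>?S. - poly (rest_poly r x) x * (1 / (r a - x)))"
  proof (rule sum.cong[OF refl])
    fix a assume a: "a \<in> ?S"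
    have "poly (rest_poly r x) x = (r a - x) * (\<Prod>j\<in>?S - {a}. r j - x)"
      unfolding rest_poly_def poly_prod using a by (simp add: prod.remove)
    then show "(\<Prod>j\<in>?S - {a}. r j - x) * (-1) = - poly (rest_poly r x) x * (1 / (r a - x))"
      using a by (simp add: field_simps)
  qed
  also have "\<dots> = - poly (rest_poly r x) x * (\<Sum>a\<in>?S. 1 / (r a - x))"
    by (simp add: sum_distrib_left)
  also have "(\<Sum>a\<in>?S. 1 / (r a - x)) = Ssum r x"
    unfolding Ssum_def by (rule sum.mono_neutral_left) auto
  finally show ?thesis .
qed

lemma mult_at_pos: "mult_at r (r a) \<ge> 1"
  unfolding mult_at_def by (metis (mono_tags) One_nat_def Suc_leI card_gt_0_iff empty_iff finite mem_Collect_eq)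

lemma rootpoly_split': "mult_at r x = Suc k \<Longrightarrow> rootpoly r = [:x, -1:] * ([:x, -1:] ^ k * rest_poly r x)"
  by (subst rootpoly_split[of r x]) (simp only: lin_eq power_Suc mult.assoc)

lemma pderiv1_at:
  "poly (pderiv (rootpoly r)) (r a) = 0 \<longleftrightarrow> mult_at r (r a) \<noteq> 1"
proof -
  let ?x = "r a"
  let ?g = "rest_poly r ?x"
  have g: "poly ?g ?x \<noteq> 0" by (rule rest_poly_nz_at)
  obtain k where k: "mult_at r ?x = Suc k" using mult_at_pos[of r a] by (cases "mult_at r ?x") auto
  have "poly (pderiv (rootpoly r)) ?x = - poly ([:?x, -1:] ^ k * ?g) ?x"
    unfolding rootpoly_split'[OF k] by (rule derL1)
  also have "\<dots> = - (0 ^ k * poly ?g ?x)" by (simp add: poly_power)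
  finally show ?thesis using g k by auto
qed

lemma res_deriv1_iff: "resultant (rootpoly r) (pderiv (rootpoly r)) \<noteq> 0 \<longleftrightarrow> inj r"
proof -
  have "inj r \<longleftrightarrow> (\<forall>a. mult_at r (r a) = 1)"
  proof
    assume "inj r"
    then have "{i. r i = r a} = {a}" for a by (auto dest: injD)
    then show "\<forall>a. mult_at r (r a) = 1" by (simp add: mult_at_def)
  next
    assume h: "\<forall>a. mult_at r (r a) = 1"
    show "inj r"
    proof (rule injI)
      fix a b assume ab: "r a = r b"
      have "card {i. r i = r a} = 1" using h by (simp add: mult_at_def)
      then obtain z where "{i. r i = r a} = {z}" by (metis card_1_singletonE)
      then show "a = b" using ab by (metis (mono_tags) mem_Collect_eq singletonD)
    qed
  qed
  then show ?thesis unfolding res_rootpoly_iff using pderiv1_at by auto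
qed

definition Cprop :: "('i::finite \<Rightarrow> complex) \<Rightarrow> bool" where
  "Cprop r \<longleftrightarrow> (\<forall>a. mult_at r (r a) = 2 \<or> (mult_at r (r a) = 1 \<and> Ssum r (r a) \<noteq> 0))"

lemma pderiv2_at:
  "poly (pderiv (pderiv (rootpoly r))) (r a) \<noteq> 0 \<longleftrightarrow>
     mult_at r (r a) = 2 \<or> (mult_at r (r a) = 1 \<and> Ssum r (r a) \<noteq> 0)"
proof -
  let ?x = "r a"
  let ?g = "rest_poly r ?x"
  have g: "poly ?g ?x \<noteq> 0" by (rule rest_poly_nz_at)
  have g': "poly (pderiv ?g) ?x = - poly ?g ?x * Ssum r ?x" by (rule rest_poly_deriv_at)
  obtain k where k: "mult_at r ?x = Suc k" using mult_at_pos[of r a] by (cases "mult_at r ?x") auto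
  have e: "poly (pderiv (pderiv (rootpoly r))) ?x = - 2 * poly (pderiv ([:?x, -1:] ^ k * ?g)) ?x"
    unfolding rootpoly_split'[OF k] by (rule derL2)
  show ?thesis
  proof (cases k)
    case 0
    then show ?thesis using e k g g' by simp
  next
    case (Suc k')
    have e2: "poly (pderiv ([:?x, -1:] ^ k * ?g)) ?x = - poly ([:?x, -1:] ^ k' * ?g) ?x"
      unfolding Suc power_Suc mult.assoc by (rule derL1)
    have "poly ([:?x, -1:] ^ k' * ?g) ?x = 0 ^ k' * poly ?g ?x" by (simp add: poly_power)
    then show ?thesis using e e2 k g Suc by (cases k') auto
  qed
qed

lemma res_deriv2_iff: "resultant (rootpoly r) (pderiv (pderiv (rootpoly r))) \<noteq> 0 \<longleftrightarrow> Cprop r"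
  unfolding res_rootpoly_iff Cprop_def using pderiv2_at by blast




lemma rootpoly_swap:
  fixes f :: "'b::finite \<Rightarrow> 'a::finite \<Rightarrow> complex"
  shows "rootpoly (\<lambda>p::'a \<times> 'b. f (snd p) (fst p)) = rootpoly (\<lambda>q::'b \<times> 'a. f (fst q) (snd q))"
proof -
  have bij: "bij_betw prod.swap (UNIV::('a \<times> 'b) set) (UNIV::('b \<times> 'a) set)"
    by (rule bij_betwI[of _ _ _ prod.swap]) auto
  show ?thesis
    unfolding rootpoly_def
    using prod.reindex_bij_betw[OF bij, of "\<lambda>q. [:f (fst q) (snd q):] - [:0, 1:]"] by simp
qed

lemma sep_eventually:
  fixes s :: "'x::finite \<Rightarrow> complex" and t :: "'y::finite \<Rightarrow> complex"
  assumes s: "inj s"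
  shows "\<forall>\<^sub>F c in at_right (0::real). \<forall>a a' b b'. a \<noteq> a' \<longrightarrow>
            s a + of_real c * t b \<noteq> s a' + of_real c * t b'"
proof (intro eventually_all_finite)
  fix a a' b b'
  show "\<forall>\<^sub>F c in at_right (0::real). a \<noteq> a' \<longrightarrow> s a + of_real c * t b \<noteq> s a' + of_real c * t b'"
  proof (cases "a = a'")
    case True then show ?thesis by simp
  next
    case False
    have "((\<lambda>c::real. (s a + of_real c * t b) - (s a' + of_real c * t b')) \<longlongrightarrow> s a - s a') (at_right 0)"
      by (auto intro!: tendsto_eq_intros)
    moreover have "s a - s a' \<noteq> 0" using False s by (auto dest: injD)
    ultimately have "\<forall>\<^sub>F c in at_right (0::real). (s a + of_real c * t b) - (s a' + of_real c * t b') \<noteq> 0"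
      by (rule tendsto_imp_eventually_ne)
    then show ?thesis by (rule eventually_mono) auto
  qed
qed

lemma pos_eventually: "\<forall>\<^sub>F c in at_right (0::real). 0 < c"
  by (simp add: eventually_at_right_less)

lemma perturb_inj:
  fixes s :: "'x::finite \<Rightarrow> complex" and t :: "'y::finite \<Rightarrow> complex"
  assumes s: "inj s" and t: "inj t"
  shows "\<exists>c>0. inj (\<lambda>p. s (fst p) + of_real c * t (snd p))"
proof -
  obtain c :: real where c: "0 < c" and sep: "\<forall>a a' b b'. a \<noteq> a' \<longrightarrow> s a + of_real c * t b \<noteq> s a' + of_real c * t b'"
    using eventually_happens'[OF _ eventually_conj[OF pos_eventually sep_eventually[OF s, of t]]] by auto
  have "inj (\<lambda>p. s (fst p) + of_real c * t (snd p))"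
  proof (rule injI)
    fix p q :: "'x \<times> 'y"
    assume eq: "s (fst p) + of_real c * t (snd p) = s (fst q) + of_real c * t (snd q)"
    then have f: "fst p = fst q" using sep by blast
    then have "t (snd p) = t (snd q)" using eq c by simp
    then have "snd p = snd q" using t by (auto dest: injD)
    then show "p = q" using f by (simp add: prod_eq_iff)
  qed
  then show ?thesis using c by blast
qed

definition Eterm :: "('x::finite \<Rightarrow> complex) \<Rightarrow> ('y::finite \<Rightarrow> complex) \<Rightarrow> real \<Rightarrow> 'x \<Rightarrow> 'y \<Rightarrow> complex" where
  "Eterm s t c a0 b0 = (\<Sum>a\<in>UNIV - {a0}. \<Sum>b\<in>UNIV. 1 / (s a - s a0 + of_real c * (t b - t b0)))"

lemma E_eventually:
  fixes s :: "'x::finite \<Rightarrow> complex" and t :: "'y::finite \<Rightarrow> complex"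
  assumes s: "inj s"
  shows "\<forall>\<^sub>F c in at_right (0::real). \<forall>a0 b0. Ssum t (t b0) \<noteq> 0 \<longrightarrow>
            Ssum t (t b0) + of_real c * Eterm s t c a0 b0 \<noteq> 0"
proof (intro eventually_all_finite)
  fix a0 b0
  show "\<forall>\<^sub>F c in at_right (0::real). Ssum t (t b0) \<noteq> 0 \<longrightarrow> Ssum t (t b0) + of_real c * Eterm s t c a0 b0 \<noteq> 0"
  proof (cases "Ssum t (t b0) = 0")
    case True then show ?thesis by simp
  next
    case False
    have nz: "s a - s a0 + of_real 0 * (t b - t b0) \<noteq> 0" if "a \<in> UNIV - {a0}" for a b
      using that s by (auto dest: injD)
    have "((\<lambda>c::real. Ssum t (t b0) + of_real c * Eterm s t c a0 b0) \<longlongrightarrow> Ssum t (t b0) + of_real 0 * Eterm s t 0 a0 b0) (at_right 0)"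
      unfolding Eterm_def
      by (intro tendsto_intros tendsto_divide tendsto_add tendsto_mult tendsto_of_real tendsto_ident_at nz) auto
    then have "((\<lambda>c::real. Ssum t (t b0) + of_real c * Eterm s t c a0 b0) \<longlongrightarrow> Ssum t (t b0)) (at_right 0)"
      by simp
    then have "\<forall>\<^sub>F c in at_right (0::real). Ssum t (t b0) + of_real c * Eterm s t c a0 b0 \<noteq> 0"
      using False by (rule tendsto_imp_eventually_ne)
    then show ?thesis by (rule eventually_mono) auto
  qed
qed

lemma perturb_C:
  fixes s :: "'x::finite \<Rightarrow> complex" and t :: "'y::finite \<Rightarrow> complex"
  assumes s: "inj s" and t: "Cprop t"
  shows "\<exists>c>0. Cprop (\<lambda>p. s (fst p) + of_real c * t (snd p))"
proof -
  obtain c :: real where c: "0 < c"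
    and sep: "\<forall>a a' b b'. a \<noteq> a' \<longrightarrow> s a + of_real c * t b \<noteq> s a' + of_real c * t b'"
    and E: "\<forall>a0 b0. Ssum t (t b0) \<noteq> 0 \<longrightarrow> Ssum t (t b0) + of_real c * Eterm s t c a0 b0 \<noteq> 0"
    using eventually_happens'[OF _ eventually_conj[OF pos_eventually
          eventually_conj[OF sep_eventually[OF s, of t] E_eventually[OF s, of t]]]] by auto
  define r where "r p = s (fst p) + of_real c * t (snd p)" for p
  have c0: "complex_of_real c \<noteq> 0" using c by simp
  have "mult_at r (r p0) = 2 \<or> (mult_at r (r p0) = 1 \<and> Ssum r (r p0) \<noteq> 0)" for p0
  proof -
    obtain a0 b0 where p0: "p0 = (a0, b0)" by (cases p0)
    have set: "{p. r p = r p0} = {a0} \<times> {b. t b = t b0}"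
    proof (rule Set.set_eqI, rule iffI)
      fix p assume "p \<in> {p. r p = r p0}"
      then have eq: "s (fst p) + of_real c * t (snd p) = s a0 + of_real c * t b0" by (simp add: r_def p0)
      then have "fst p = a0" using sep by blast
      then show "p \<in> {a0} \<times> {b. t b = t b0}" using eq c0 by (auto simp: mem_Times_iff)
    next
      fix p assume "p \<in> {a0} \<times> {b. t b = t b0}"
      then show "p \<in> {p. r p = r p0}" by (auto simp: r_def p0 mem_Times_iff)
    qed
    have mult: "mult_at r (r p0) = mult_at t (t b0)"
      unfolding mult_at_def set by (simp add: card_cartesian_product)
    have "Ssum r (r p0) = (\<Sum>a\<in>UNIV. \<Sum>b\<in>UNIV. 1 / (s a - s a0 + of_real c * (t b - t b0)))"
      unfolding Ssum_def sum_UNIV_prod r_def p0 by (simp add: algebra_simps)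
    also have "\<dots> = (\<Sum>b\<in>UNIV. 1 / (of_real c * (t b - t b0))) + Eterm s t c a0 b0"
      unfolding Eterm_def by (subst sum.remove[of UNIV a0]) auto
    also have "(\<Sum>b\<in>UNIV. 1 / (of_real c * (t b - t b0))) = (1 / of_real c) * Ssum t (t b0)"
      unfolding Ssum_def sum_distrib_left by (rule sum.cong) auto
    finally have S0: "Ssum r (r p0) = (1 / of_real c) * Ssum t (t b0) + Eterm s t c a0 b0" .
    have S: "Ssum r (r p0) = (1 / of_real c) * (Ssum t (t b0) + of_real c * Eterm s t c a0 b0)"
      unfolding S0 using c0 by (simp add: distrib_left)
    from t have "mult_at t (t b0) = 2 \<or> (mult_at t (t b0) = 1 \<and> Ssum t (t b0) \<noteq> 0)"
      unfolding Cprop_def by blast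
    then show ?thesis
    proof
      assume "mult_at t (t b0) = 2"
      then show ?thesis using mult by simp
    next
      assume h: "mult_at t (t b0) = 1 \<and> Ssum t (t b0) \<noteq> 0"
      then have "Ssum t (t b0) + of_real c * Eterm s t c a0 b0 \<noteq> 0" using E by blast
      moreover have "1 / complex_of_real c \<noteq> 0" using c0 by simp
      ultimately have "Ssum r (r p0) \<noteq> 0" unfolding S mult_eq_0_iff by blast
      then show ?thesis using h mult by simp
    qed
  qed
  then have "Cprop r" unfolding Cprop_def by blast
  then show ?thesis using c unfolding r_def by blast
qed




definition emb1 :: "real \<Rightarrow> ((complex^'n::finite^'n) \<times> (complex^'n^'n)) list
    \<Rightarrow> ((complex^('n + 'p::finite)^('n + 'p)) \<times> (complex^('n + 'p)^('n + 'p))) list" where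
  "emb1 c s = map (\<lambda>(Y, Z). (blockdiag (c *\<^sub>R Y) 0, blockdiag Z 0)) s"

definition emb2 :: "real \<Rightarrow> ((complex^'p::finite^'p) \<times> (complex^'p^'p)) list
    \<Rightarrow> ((complex^('n::finite + 'p)^('n + 'p)) \<times> (complex^('n + 'p)^('n + 'p))) list" where
  "emb2 c s = map (\<lambda>(Y, Z). (blockdiag 0 (c *\<^sub>R Y), blockdiag 0 Z)) s"

lemma res_rootpoly_disj: "resultant (rootpoly r) (rootpoly u) \<noteq> 0 \<longleftrightarrow> (\<forall>i j. r i \<noteq> u j)"
  unfolding res_rootpoly_iff rootpoly_root by auto

lemma pV_tensor:
  fixes G :: "(complex^'n^'n) set" and G' :: "(complex^'p^'p) set"
    and \<rho> :: "complex^'n^'n \<Rightarrow> complex^'m^'m" and \<rho>' :: "complex^'p^'p \<Rightarrow> complex^'q^'q"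
  assumes rep: "is_rep G \<rho>" "is_rep G' \<rho>'" and clg: "compact_lie_group G" "compact_lie_group G'"
    and s: "sym2_elem G s" and s': "sym2_elem G' s'"
  shows "\<exists>(d1::'m \<Rightarrow> complex) (d2::'q \<Rightarrow> complex). p_V \<rho> s = rootpoly d1 \<and> p_V \<rho>' s' = rootpoly d2 \<and>
    (\<forall>c c'. sym2_elem (prod_group G G') (emb1 c s @ emb2 c' s') \<and>
       p_V (tensor_rep \<rho> \<rho>') (emb1 c s @ emb2 c' s') = rootpoly (\<lambda>p. of_real c * d1 (fst p) + of_real c' * d2 (snd p)))"
proof -
  obtain d1 :: "'m \<Rightarrow> complex" and d2 :: "'q \<Rightarrow> complex" where d: "char_pol (D_op \<rho> s) = rootpoly d1" "char_pol (D_op \<rho>' s') = rootpoly d2"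
    and k: "\<And>c1 c2::real. char_pol (c1 *\<^sub>R kron (D_op \<rho> s) vI + c2 *\<^sub>R kron vI (D_op \<rho>' s'))
        = rootpoly (\<lambda>p. of_real c1 * d1 (fst p) + of_real c2 * d2 (snd p))"
    using char_pol_kron[of "D_op \<rho> s" "D_op \<rho>' s'"] by blast
  have "sym2_elem (prod_group G G') (emb1 c s @ emb2 c' s') \<and>
       p_V (tensor_rep \<rho> \<rho>') (emb1 c s @ emb2 c' s') = rootpoly (\<lambda>p. of_real c * d1 (fst p) + of_real c' * d2 (snd p))" for c c'
  proof
    show "sym2_elem (prod_group G G') (emb1 c s @ emb2 c' s')"
      unfolding sym2_append emb1_def emb2_def using sym2_embed1[OF clg(2) s] sym2_embed2[OF clg(1) s'] by blast
    have "D_op (tensor_rep \<rho> \<rho>') (emb1 c s @ emb2 c' s') = c *\<^sub>R kron (D_op \<rho> s) vI + c' *\<^sub>R kron vI (D_op \<rho>' s')"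
      unfolding D_op_append emb1_def emb2_def D_op_embed1[OF rep clg s] D_op_embed2[OF rep clg s'] ..
    then show "p_V (tensor_rep \<rho> \<rho>') (emb1 c s @ emb2 c' s') = rootpoly (\<lambda>p. of_real c * d1 (fst p) + of_real c' * d2 (snd p))"
      unfolding p_V_def using k by simp
  qed
  then show ?thesis using d unfolding p_V_def by blast
qed

theorem lemma4p4:
  fixes G :: "(complex^'n^'n) set" and G' :: "(complex^'p^'p) set"
    and \<rho>V :: "complex^'n^'n \<Rightarrow> complex^'m^'m"
    and \<rho>W :: "complex^'n^'n \<Rightarrow> complex^'k^'k"
    and \<rho>V' :: "complex^'p^'p \<Rightarrow> complex^'q^'q"
    and \<rho>W' :: "complex^'p^'p \<Rightarrow> complex^'l^'l"
  assumes "compact_lie_group G" and "compact_lie_group G'"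
    and "irreducible_rep G \<rho>V" and "irreducible_rep G \<rho>W"
    and "irreducible_rep G' \<rho>V'" and "irreducible_rep G' \<rho>W'"
  shows "((a_nonzero G \<rho>V \<rho>W \<or> a_nonzero G' \<rho>V' \<rho>W') \<longrightarrow>
           a_nonzero (prod_group G G') (tensor_rep \<rho>V \<rho>V') (tensor_rep \<rho>W \<rho>W'))
    \<and> (b_nonzero G \<rho>V \<and> b_nonzero G' \<rho>V' \<longrightarrow>
           b_nonzero (prod_group G G') (tensor_rep \<rho>V \<rho>V'))
    \<and> (((real_type G \<rho>V \<and> b_nonzero G \<rho>V \<and> quaternionic_type G' \<rho>V' \<and> c_nonzero G' \<rho>V')
         \<or> (quaternionic_type G \<rho>V \<and> c_nonzero G \<rho>V \<and> real_type G' \<rho>V' \<and> b_nonzero G' \<rho>V')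
         \<longrightarrow> c_nonzero (prod_group G G') (tensor_rep \<rho>V \<rho>V')))"
proof -
  note clg = assms(1,2)
  have rV: "is_rep G \<rho>V" and rW: "is_rep G \<rho>W" and rV': "is_rep G' \<rho>V'" and rW': "is_rep G' \<rho>W'"
    using assms(3-6) by (auto simp: irreducible_rep_def)
  have nil: "sym2_elem G []" "sym2_elem G' []" by (auto simp: sym2_elem_def)
  have partA: "a_nonzero (prod_group G G') (tensor_rep \<rho>V \<rho>V') (tensor_rep \<rho>W \<rho>W')"
    if "a_nonzero G \<rho>V \<rho>W \<or> a_nonzero G' \<rho>V' \<rho>W'"
    using that
  proof
    assume "a_nonzero G \<rho>V \<rho>W"
    then obtain s where s: "sym2_elem G s" and res: "resultant (p_V \<rho>V s) (p_V \<rho>W s) \<noteq> 0"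
      unfolding a_nonzero_def by blast
    obtain d1 :: "'m \<Rightarrow> complex" and d2 :: "'q \<Rightarrow> complex" where dV: "p_V \<rho>V s = rootpoly d1" and
      kV: "\<And>c c'. sym2_elem (prod_group G G') (emb1 c s @ emb2 c' ([]::((complex^'p^'p) \<times> (complex^'p^'p)) list)) \<and>
        p_V (tensor_rep \<rho>V \<rho>V') (emb1 c s @ emb2 c' []) = rootpoly (\<lambda>p. of_real c * d1 (fst p) + of_real c' * d2 (snd p))"
      using pV_tensor[OF rV rV' clg s nil(2)] by blast
    obtain e1 :: "'k \<Rightarrow> complex" and e2 :: "'l \<Rightarrow> complex" where eW: "p_V \<rho>W s = rootpoly e1" and
      kW: "\<And>c c'. p_V (tensor_rep \<rho>W \<rho>W') (emb1 c s @ emb2 c' ([]::((complex^'p^'p) \<times> (complex^'p^'p)) list)) = rootpoly (\<lambda>p. of_real c * e1 (fst p) + of_real c' * e2 (snd p))"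
      using pV_tensor[OF rW rW' clg s nil(2)] by blast
    have "\<forall>i j. d1 i \<noteq> e1 j" using res unfolding dV eW res_rootpoly_disj .
    then have "resultant (p_V (tensor_rep \<rho>V \<rho>V') (emb1 1 s @ emb2 0 [])) (p_V (tensor_rep \<rho>W \<rho>W') (emb1 1 s @ emb2 0 [])) \<noteq> 0"
      unfolding kV[THEN conjunct2] kW res_rootpoly_disj by simp
    then show ?thesis unfolding a_nonzero_def using kV[THEN conjunct1] by blast
  next
    assume "a_nonzero G' \<rho>V' \<rho>W'"
    then obtain s' where s': "sym2_elem G' s'" and res: "resultant (p_V \<rho>V' s') (p_V \<rho>W' s') \<noteq> 0"
      unfolding a_nonzero_def by blast
    obtain d1 :: "'m \<Rightarrow> complex" and d2 :: "'q \<Rightarrow> complex" where dV: "p_V \<rho>V' s' = rootpoly d2" and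
      kV: "\<And>c c'. sym2_elem (prod_group G G') (emb1 c ([]::((complex^'n^'n) \<times> (complex^'n^'n)) list) @ emb2 c' s') \<and>
        p_V (tensor_rep \<rho>V \<rho>V') (emb1 c [] @ emb2 c' s') = rootpoly (\<lambda>p. of_real c * d1 (fst p) + of_real c' * d2 (snd p))"
      using pV_tensor[OF rV rV' clg nil(1) s'] by blast
    obtain e1 :: "'k \<Rightarrow> complex" and e2 :: "'l \<Rightarrow> complex" where eW: "p_V \<rho>W' s' = rootpoly e2" and
      kW: "\<And>c c'. p_V (tensor_rep \<rho>W \<rho>W') (emb1 c ([]::((complex^'n^'n) \<times> (complex^'n^'n)) list) @ emb2 c' s') = rootpoly (\<lambda>p. of_real c * e1 (fst p) + of_real c' * e2 (snd p))"
      using pV_tensor[OF rW rW' clg nil(1) s'] by blast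
    have "\<forall>i j. d2 i \<noteq> e2 j" using res unfolding dV eW res_rootpoly_disj .
    then have "resultant (p_V (tensor_rep \<rho>V \<rho>V') (emb1 0 [] @ emb2 1 s')) (p_V (tensor_rep \<rho>W \<rho>W') (emb1 0 [] @ emb2 1 s')) \<noteq> 0"
      unfolding kV[THEN conjunct2] kW res_rootpoly_disj by simp
    then show ?thesis unfolding a_nonzero_def using kV[THEN conjunct1] by blast
  qed
  have partB: "b_nonzero (prod_group G G') (tensor_rep \<rho>V \<rho>V')"
    if hb: "b_nonzero G \<rho>V" "b_nonzero G' \<rho>V'"
  proof -
    obtain s where s: "sym2_elem G s" and res: "resultant (p_V \<rho>V s) (pderiv (p_V \<rho>V s)) \<noteq> 0"
      using hb(1) unfolding b_nonzero_def by blast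
    obtain s' where s': "sym2_elem G' s'" and res': "resultant (p_V \<rho>V' s') (pderiv (p_V \<rho>V' s')) \<noteq> 0"
      using hb(2) unfolding b_nonzero_def by blast
    obtain d1 :: "'m \<Rightarrow> complex" and d2 :: "'q \<Rightarrow> complex" where d1: "p_V \<rho>V s = rootpoly d1" and d2: "p_V \<rho>V' s' = rootpoly d2" and
      k: "\<And>c c'. sym2_elem (prod_group G G') (emb1 c s @ emb2 c' s') \<and>
        p_V (tensor_rep \<rho>V \<rho>V') (emb1 c s @ emb2 c' s') = rootpoly (\<lambda>p. of_real c * d1 (fst p) + of_real c' * d2 (snd p))"
      using pV_tensor[OF rV rV' clg s s'] by blast
    have "inj d1" "inj d2" using res res' unfolding d1 d2 res_deriv1_iff by auto
    then obtain c where "c > 0" and inj: "inj (\<lambda>p. d1 (fst p) + of_real c * d2 (snd p))"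
      using perturb_inj by blast
    have "resultant (p_V (tensor_rep \<rho>V \<rho>V') (emb1 1 s @ emb2 c s')) (pderiv (p_V (tensor_rep \<rho>V \<rho>V') (emb1 1 s @ emb2 c s'))) \<noteq> 0"
      unfolding k[THEN conjunct2] res_deriv1_iff using inj by simp
    then show ?thesis unfolding b_nonzero_def using k[THEN conjunct1] by blast
  qed
  have partC: "c_nonzero (prod_group G G') (tensor_rep \<rho>V \<rho>V')"
    if "(real_type G \<rho>V \<and> b_nonzero G \<rho>V \<and> quaternionic_type G' \<rho>V' \<and> c_nonzero G' \<rho>V')
         \<or> (quaternionic_type G \<rho>V \<and> c_nonzero G \<rho>V \<and> real_type G' \<rho>V' \<and> b_nonzero G' \<rho>V')"
    using that
  proof
    assume h: "real_type G \<rho>V \<and> b_nonzero G \<rho>V \<and> quaternionic_type G' \<rho>V' \<and> c_nonzero G' \<rho>V'"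
    obtain s where s: "sym2_elem G s" and res: "resultant (p_V \<rho>V s) (pderiv (p_V \<rho>V s)) \<noteq> 0"
      using h unfolding b_nonzero_def by blast
    obtain s' where s': "sym2_elem G' s'" and res': "resultant (p_V \<rho>V' s') (pderiv (pderiv (p_V \<rho>V' s'))) \<noteq> 0"
      using h unfolding c_nonzero_def by blast
    obtain d1 :: "'m \<Rightarrow> complex" and d2 :: "'q \<Rightarrow> complex" where d1: "p_V \<rho>V s = rootpoly d1" and d2: "p_V \<rho>V' s' = rootpoly d2" and
      k: "\<And>c c'. sym2_elem (prod_group G G') (emb1 c s @ emb2 c' s') \<and>
        p_V (tensor_rep \<rho>V \<rho>V') (emb1 c s @ emb2 c' s') = rootpoly (\<lambda>p. of_real c * d1 (fst p) + of_real c' * d2 (snd p))"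
      using pV_tensor[OF rV rV' clg s s'] by blast
    have "inj d1" "Cprop d2" using res res' unfolding d1 d2 res_deriv1_iff res_deriv2_iff by auto
    then obtain c where "c > 0" and C: "Cprop (\<lambda>p. d1 (fst p) + of_real c * d2 (snd p))"
      using perturb_C by blast
    have "resultant (p_V (tensor_rep \<rho>V \<rho>V') (emb1 1 s @ emb2 c s')) (pderiv (pderiv (p_V (tensor_rep \<rho>V \<rho>V') (emb1 1 s @ emb2 c s')))) \<noteq> 0"
      unfolding k[THEN conjunct2] res_deriv2_iff using C by simp
    then show ?thesis unfolding c_nonzero_def using k[THEN conjunct1] by blast
  next
    assume h: "quaternionic_type G \<rho>V \<and> c_nonzero G \<rho>V \<and> real_type G' \<rho>V' \<and> b_nonzero G' \<rho>V'"
    obtain s where s: "sym2_elem G s" and res: "resultant (p_V \<rho>V s) (pderiv (pderiv (p_V \<rho>V s))) \<noteq> 0"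
      using h unfolding c_nonzero_def by blast
    obtain s' where s': "sym2_elem G' s'" and res': "resultant (p_V \<rho>V' s') (pderiv (p_V \<rho>V' s')) \<noteq> 0"
      using h unfolding b_nonzero_def by blast
    obtain d1 :: "'m \<Rightarrow> complex" and d2 :: "'q \<Rightarrow> complex" where d1: "p_V \<rho>V s = rootpoly d1" and d2: "p_V \<rho>V' s' = rootpoly d2" and
      k: "\<And>c c'. sym2_elem (prod_group G G') (emb1 c s @ emb2 c' s') \<and>
        p_V (tensor_rep \<rho>V \<rho>V') (emb1 c s @ emb2 c' s') = rootpoly (\<lambda>p. of_real c * d1 (fst p) + of_real c' * d2 (snd p))"
      using pV_tensor[OF rV rV' clg s s'] by blast
    have "Cprop d1" "inj d2" using res res' unfolding d1 d2 res_deriv1_iff res_deriv2_iff by auto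
    then obtain c where "c > 0" and C: "Cprop (\<lambda>q. d2 (fst q) + of_real c * d1 (snd q))"
      using perturb_C by blast
    have sw: "rootpoly (\<lambda>p. of_real c * d1 (fst p) + of_real 1 * d2 (snd p)) = rootpoly (\<lambda>q. d2 (fst q) + of_real c * d1 (snd q))"
      using rootpoly_swap[of "\<lambda>b a. d2 b + of_real c * d1 a"] by (simp add: add.commute)
    have "resultant (p_V (tensor_rep \<rho>V \<rho>V') (emb1 c s @ emb2 1 s')) (pderiv (pderiv (p_V (tensor_rep \<rho>V \<rho>V') (emb1 c s @ emb2 1 s')))) \<noteq> 0"
      unfolding k[THEN conjunct2] sw res_deriv2_iff using C .
    then show ?thesis unfolding c_nonzero_def using k[THEN conjunct1] by blast
  qed
  show ?thesis using partA partB partC by blast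
qed


end
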